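(* Let $R$ be a ring with identity. The following are equivalent: (1) $R$ is semisimple; (2) $\mathbb{CFM}_\Lambda(R)$ is SSP for a countably infinite set $\Lambda$; (3) $\mathbb{CFM}_\Lambda(R)$ is SSP for some infinite set $\Lambda$; (4) $\mathbb{CFM}_\Lambda(R)$ is SSP for every infinite set $\Lambda$.
   Context: Rings are associative with identity. For an infinite set $\Lambda$, $\mathbb{CFM}_\Lambda(R)$ denotes the ring of column finite $\Lambda\times\Lambda$ matrices over $R$ (matrices with entries in $R$, rows and columns indexed by $\Lambda$, each column having only finitely many nonzero entries), with the usual matrix operations. A ring $S$ is right SSP if the sum of any two direct summands of $S_S$ is again a direct summand of $S_S$; left SSP analogously with ${}_SS$; $S$ is SSP if it is both right and left SSP. *)

theory Defs
  imports Main
begin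

definition right_ideal_in ::
  "'b set \<Rightarrow> ('b \<Rightarrow> 'b \<Rightarrow> 'b) \<Rightarrow> 'b \<Rightarrow> ('b \<Rightarrow> 'b \<Rightarrow> 'b) \<Rightarrow> 'b set \<Rightarrow> bool" where
  "right_ideal_in C add z mult I \<longleftrightarrow>
     I \<subseteq> C \<and> z \<in> I \<and> (\<forall>x\<in>I. \<forall>y\<in>I. add x y \<in> I) \<and> (\<forall>x\<in>I. \<forall>r\<in>C. mult x r \<in> I)"

definition set_plus_in :: "('b \<Rightarrow> 'b \<Rightarrow> 'b) \<Rightarrow> 'b set \<Rightarrow> 'b set \<Rightarrow> 'b set" where
  "set_plus_in add A B = {add a b | a b. a \<in> A \<and> b \<in> B}"

definition right_summand_in ::
  "'b set \<Rightarrow> ('b \<Rightarrow> 'b \<Rightarrow> 'b) \<Rightarrow> 'b \<Rightarrow> ('b \<Rightarrow> 'b \<Rightarrow> 'b) \<Rightarrow> 'b set \<Rightarrow> bool" where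
  "right_summand_in C add z mult A \<longleftrightarrow>
     right_ideal_in C add z mult A \<and>
     (\<exists>B. right_ideal_in C add z mult B \<and> A \<inter> B = {z} \<and> set_plus_in add A B = C)"

definition right_SSP_in ::
  "'b set \<Rightarrow> ('b \<Rightarrow> 'b \<Rightarrow> 'b) \<Rightarrow> 'b \<Rightarrow> ('b \<Rightarrow> 'b \<Rightarrow> 'b) \<Rightarrow> bool" where
  "right_SSP_in C add z mult \<longleftrightarrow>
     (\<forall>A B. right_summand_in C add z mult A \<and> right_summand_in C add z mult B
        \<longrightarrow> right_summand_in C add z mult (set_plus_in add A B))"

definition left_SSP_in ::
  "'b set \<Rightarrow> ('b \<Rightarrow> 'b \<Rightarrow> 'b) \<Rightarrow> 'b \<Rightarrow> ('b \<Rightarrow> 'b \<Rightarrow> 'b) \<Rightarrow> bool" where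
  "left_SSP_in C add z mult \<longleftrightarrow> right_SSP_in C add z (\<lambda>x y. mult y x)"

definition SSP_in ::
  "'b set \<Rightarrow> ('b \<Rightarrow> 'b \<Rightarrow> 'b) \<Rightarrow> 'b \<Rightarrow> ('b \<Rightarrow> 'b \<Rightarrow> 'b) \<Rightarrow> bool" where
  "SSP_in C add z mult \<longleftrightarrow> right_SSP_in C add z mult \<and> left_SSP_in C add z mult"

definition right_ideal :: "'a::ring_1 set \<Rightarrow> bool" where
  "right_ideal I \<longleftrightarrow> right_ideal_in UNIV (+) 0 (*) I"

definition minimal_right_ideal :: "'a::ring_1 set \<Rightarrow> bool" where
  "minimal_right_ideal I \<longleftrightarrow> right_ideal I \<and> I \<noteq> {0} \<and>
     (\<forall>J. right_ideal J \<and> J \<subseteq> I \<longrightarrow> J = {0} \<or> J = I)"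

definition semisimple_ring :: "'a::ring_1 itself \<Rightarrow> bool" where
  "semisimple_ring _ \<longleftrightarrow>
     (\<forall>x::'a. \<exists>F f. finite F \<and> (\<forall>I\<in>F. minimal_right_ideal I \<and> f I \<in> I) \<and>
        x = (\<Sum>I\<in>F. f I))"

definition cfm :: "'l set \<Rightarrow> ('l \<Rightarrow> 'l \<Rightarrow> 'a::zero) set" where
  "cfm \<Lambda> = {M. (\<forall>i j. (i \<notin> \<Lambda> \<or> j \<notin> \<Lambda>) \<longrightarrow> M i j = 0) \<and>
                (\<forall>j\<in>\<Lambda>. finite {i\<in>\<Lambda>. M i j \<noteq> 0})}"

definition cfm_add :: "('l \<Rightarrow> 'l \<Rightarrow> 'a::ring_1) \<Rightarrow> ('l \<Rightarrow> 'l \<Rightarrow> 'a) \<Rightarrow> ('l \<Rightarrow> 'l \<Rightarrow> 'a)" where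
  "cfm_add M N = (\<lambda>i j. M i j + N i j)"

definition cfm_zero :: "'l \<Rightarrow> 'l \<Rightarrow> 'a::ring_1" where
  "cfm_zero = (\<lambda>i j. 0)"

text \<open>Product: the sum over j ranges over the finitely many j with N j k nonzero.\<close>
definition cfm_mult :: "'l set \<Rightarrow> ('l \<Rightarrow> 'l \<Rightarrow> 'a::ring_1) \<Rightarrow> ('l \<Rightarrow> 'l \<Rightarrow> 'a) \<Rightarrow> ('l \<Rightarrow> 'l \<Rightarrow> 'a)" where
  "cfm_mult \<Lambda> M N = (\<lambda>i k. \<Sum>j\<in>{j\<in>\<Lambda>. N j k \<noteq> 0}. M i j * N j k)"

definition CFM_SSP :: "'a::ring_1 itself \<Rightarrow> 'l set \<Rightarrow> bool" where
  "CFM_SSP _ \<Lambda> \<longleftrightarrow> SSP_in (cfm \<Lambda> :: ('l \<Rightarrow> 'l \<Rightarrow> 'a) set) cfm_add cfm_zero (cfm_mult \<Lambda>)"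

end

theory Submission
  imports Defs "HOL-Library.Function_Algebras"
begin


locale aring =
  fixes C :: "'b::ab_group_add set" and mult :: "'b \<Rightarrow> 'b \<Rightarrow> 'b" (infixl "\<star>" 70) and one :: 'b
  assumes zero_in: "0 \<in> C" and one_in: "one \<in> C"
    and add_in: "x \<in> C \<Longrightarrow> y \<in> C \<Longrightarrow> x + y \<in> C"
    and uminus_in: "x \<in> C \<Longrightarrow> - x \<in> C"
    and mult_in: "x \<in> C \<Longrightarrow> y \<in> C \<Longrightarrow> x \<star> y \<in> C"
    and assoc: "x \<in> C \<Longrightarrow> y \<in> C \<Longrightarrow> w \<in> C \<Longrightarrow> (x \<star> y) \<star> w = x \<star> (y \<star> w)"
    and distl: "x \<in> C \<Longrightarrow> y \<in> C \<Longrightarrow> w \<in> C \<Longrightarrow> x \<star> (y + w) = x \<star> y + x \<star> w"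
    and distr: "x \<in> C \<Longrightarrow> y \<in> C \<Longrightarrow> w \<in> C \<Longrightarrow> (x + y) \<star> w = x \<star> w + y \<star> w"
    and one_l: "x \<in> C \<Longrightarrow> one \<star> x = x"
    and one_r: "x \<in> C \<Longrightarrow> x \<star> one = x"
begin

lemma diff_in: "x \<in> C \<Longrightarrow> y \<in> C \<Longrightarrow> x - y \<in> C"
  using add_in uminus_in by (metis diff_conv_add_uminus)

lemma mult_zero_r: "x \<in> C \<Longrightarrow> x \<star> 0 = 0"
  using distl[of x 0 0] zero_in by simp

lemma mult_zero_l: "x \<in> C \<Longrightarrow> 0 \<star> x = 0"
  using distr[of 0 0 x] zero_in by simp

lemma mult_minus_r: "x \<in> C \<Longrightarrow> y \<in> C \<Longrightarrow> x \<star> (- y) = - (x \<star> y)"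
  using distl[of x y "-y"] uminus_in mult_zero_r by (simp add: add.inverse_unique)

lemma mult_minus_l: "x \<in> C \<Longrightarrow> y \<in> C \<Longrightarrow> (- x) \<star> y = - (x \<star> y)"
  using distr[of x "-x" y] uminus_in mult_zero_l by (simp add: add.inverse_unique)

lemma diffl: "x \<in> C \<Longrightarrow> y \<in> C \<Longrightarrow> w \<in> C \<Longrightarrow> x \<star> (y - w) = x \<star> y - x \<star> w"
  using distl[of x y "-w"] uminus_in mult_minus_r by simp

lemma diffr: "x \<in> C \<Longrightarrow> y \<in> C \<Longrightarrow> w \<in> C \<Longrightarrow> (x - y) \<star> w = x \<star> w - y \<star> w"
  using distr[of x "-y" w] uminus_in mult_minus_l by simp

definition pid :: "'b \<Rightarrow> 'b set" where "pid e = {e \<star> s |s. s \<in> C}"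

lemma summand_idem:
  assumes "right_summand_in C (+) 0 (\<star>) A"
  shows "\<exists>e\<in>C. e \<star> e = e \<and> A = pid e"
proof -
  from assms obtain B where A: "right_ideal_in C (+) 0 (\<star>) A" and B: "right_ideal_in C (+) 0 (\<star>) B"
    and AB: "A \<inter> B = {0}" and S: "set_plus_in (+) A B = C"
    unfolding right_summand_in_def by blast
  from S one_in obtain e e' where e: "e \<in> A" and e': "e' \<in> B" and one: "one = e + e'"
    unfolding set_plus_in_def by blast
  have AC: "A \<subseteq> C" and BC: "B \<subseteq> C" using A B unfolding right_ideal_in_def by auto
  have key: "e \<star> a = a" if a: "a \<in> A" for a
  proof -
    have aC: "a \<in> C" using a AC by auto
    have "a = e \<star> a + e' \<star> a" using one_l[OF aC] distr[of e e' a] e e' AC BC aC one by auto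
    have ea: "e \<star> a \<in> A" using A e aC unfolding right_ideal_in_def by auto
    have e'a: "e' \<star> a \<in> B" using B e' aC unfolding right_ideal_in_def by auto
    have neg: "- (e \<star> a) \<in> A"
    proof -
      have "(e \<star> a) \<star> (- one) \<in> A" using A ea uminus_in one_in unfolding right_ideal_in_def by auto
      moreover have "(e \<star> a) \<star> (- one) = - (e \<star> a)"
        using mult_minus_r one_r one_in mult_in e aC AC by auto
      ultimately show ?thesis by simp
    qed
    have "e' \<star> a = a + - (e \<star> a)" using \<open>a = e \<star> a + e' \<star> a\<close> by (simp add: algebra_simps)
    hence "e' \<star> a \<in> A" using A a neg unfolding right_ideal_in_def by auto
    hence "e' \<star> a = 0" using e'a AB by auto
    thus ?thesis using \<open>a = e \<star> a + e' \<star> a\<close> by simp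
  qed
  have "A = pid e"
  proof
    show "A \<subseteq> pid e" unfolding pid_def using key AC by force
    show "pid e \<subseteq> A" unfolding pid_def using A e unfolding right_ideal_in_def by auto
  qed
  thus ?thesis using key e AC by auto
qed

lemma pid_ideal: "e \<in> C \<Longrightarrow> right_ideal_in C (+) 0 (\<star>) (pid e)"
  unfolding right_ideal_in_def
proof (intro conjI ballI)
  assume e: "e \<in> C"
  show "pid e \<subseteq> C" using e mult_in unfolding pid_def by blast
  have "0 = e \<star> 0" using mult_zero_r e by simp
  thus "0 \<in> pid e" using zero_in unfolding pid_def by blast
  fix x y assume "x \<in> pid e" "y \<in> pid e"
  then obtain s t where "s \<in> C" "t \<in> C" "x = e \<star> s" "y = e \<star> t" unfolding pid_def by blast
  moreover hence "x + y = e \<star> (s + t)" using distl e by simp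
  ultimately show "x + y \<in> pid e" using add_in unfolding pid_def by blast
next
  fix x r assume e: "e \<in> C" and "x \<in> pid e" "r \<in> C"
  then obtain s where "s \<in> C" "x = e \<star> s" unfolding pid_def by blast
  moreover hence "x \<star> r = e \<star> (s \<star> r)" using assoc e \<open>r \<in> C\<close> by simp
  ultimately show "x \<star> r \<in> pid e" using mult_in \<open>r \<in> C\<close> unfolding pid_def by blast
qed

lemma idem_summand:
  assumes e: "e \<in> C" and ee: "e \<star> e = e"
  shows "right_summand_in C (+) 0 (\<star>) (pid e)"
proof -
  have f: "one - e \<in> C" using diff_in one_in e by auto
  have I1: "right_ideal_in C (+) 0 (\<star>) (pid e)" using pid_ideal e by auto
  have I2: "right_ideal_in C (+) 0 (\<star>) (pid (one - e))" using pid_ideal f by auto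
  have "pid e \<inter> pid (one - e) = {0}"
  proof
    show "{0} \<subseteq> pid e \<inter> pid (one - e)" using I1 I2 unfolding right_ideal_in_def by auto
    show "pid e \<inter> pid (one - e) \<subseteq> {0}"
    proof
      fix x assume "x \<in> pid e \<inter> pid (one - e)"
      then obtain s t where s: "s \<in> C" "x = e \<star> s" and t: "t \<in> C" "x = (one - e) \<star> t"
        unfolding pid_def by auto
      have "e \<star> x = x" using s assoc[of e e s] e ee by simp
      moreover have "e \<star> x = 0"
      proof -
        have "e \<star> x = (e \<star> (one - e)) \<star> t" using t assoc e f by simp
        also have "e \<star> (one - e) = 0" using diffl[of e one e] e one_in one_r ee by simp
        finally show ?thesis using mult_zero_l t by simp
      qed
      ultimately show "x \<in> {0}" by simp
    qed
  qed
  moreover have "set_plus_in (+) (pid e) (pid (one - e)) = C"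
  proof
    show "set_plus_in (+) (pid e) (pid (one - e)) \<subseteq> C"
    proof
      fix z assume "z \<in> set_plus_in (+) (pid e) (pid (one - e))"
      then obtain u v where uv: "u \<in> pid e" "v \<in> pid (one - e)" "z = u + v"
        unfolding set_plus_in_def by blast
      have "pid e \<subseteq> C" "pid (one - e) \<subseteq> C" using I1 I2 unfolding right_ideal_in_def by auto
      thus "z \<in> C" using uv add_in by auto
    qed
    show "C \<subseteq> set_plus_in (+) (pid e) (pid (one - e))"
    proof
      fix x assume x: "x \<in> C"
      have "x = e \<star> x + (one - e) \<star> x" using diffr[of one e x] one_in e x one_l by simp
      thus "x \<in> set_plus_in (+) (pid e) (pid (one - e))" unfolding set_plus_in_def pid_def using x by blast
    qed
  qed
  ultimately show ?thesis unfolding right_summand_in_def using I1 I2 by blast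
qed

lemma regular_SSP:
  assumes reg: "\<forall>a\<in>C. \<exists>b\<in>C. a \<star> b \<star> a = a"
  shows "right_SSP_in C (+) 0 (\<star>)"
  unfolding right_SSP_in_def
proof (intro allI impI)
  fix A B assume "right_summand_in C (+) 0 (\<star>) A \<and> right_summand_in C (+) 0 (\<star>) B"
  then obtain e f where e: "e \<in> C" "e \<star> e = e" "A = pid e" and f: "f \<in> C" "f \<star> f = f" "B = pid f"
    using summand_idem by meson
  note [simp] = zero_in one_in add_in uminus_in mult_in diff_in
  define g where "g = (one - e) \<star> f"
  have gC: "g \<in> C" using e f g_def by simp
  obtain y where y: "y \<in> C" "g \<star> y \<star> g = g" using reg gC by blast
  define g' where "g' = g \<star> y"
  have g'C: "g' \<in> C" using gC y g'_def by simp
  have e1e: "e \<star> (one - e) = 0" using e by (simp add: diffl one_r)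
  have ee1: "(one - e) \<star> e = 0" using e by (simp add: diffr one_l)
  have eg': "e \<star> g' = 0"
  proof -
    have "e \<star> g' = ((e \<star> (one - e)) \<star> f) \<star> y" unfolding g'_def g_def using e f y by (simp add: assoc)
    thus ?thesis using e1e mult_zero_l f y by simp
  qed
  have g'g: "g' \<star> g = g" using y g'_def by simp
  have g'g': "g' \<star> g' = g'" unfolding g'_def using y gC by (simp add: assoc[symmetric])
  define h where "h = e + g' \<star> (one - e)"
  have hC: "h \<in> C" using h_def e g'C by simp
  have he: "h \<star> e = e" unfolding h_def using e g'C ee1 by (simp add: distr assoc mult_zero_r)
  have hg': "h \<star> g' = g'" unfolding h_def using e g'C eg' g'g'
    by (simp add: distr assoc diffl diffr one_l mult_zero_r)
  have hh: "h \<star> h = h"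
  proof -
    have "h \<star> h = h \<star> e + h \<star> (g' \<star> (one - e))"
      using distl[of h e "g' \<star> (one - e)"] e g'C hC by (simp add: h_def[symmetric])
    also have "\<dots> = h \<star> e + (h \<star> g') \<star> (one - e)" using assoc[of h g' "one - e"] hC g'C e by simp
    finally show ?thesis using he hg' h_def by simp
  qed
  have "set_plus_in (+) A B = pid h"
  proof
    show "set_plus_in (+) A B \<subseteq> pid h"
    proof
      fix x assume "x \<in> set_plus_in (+) A B"
      then obtain s s' where s: "s \<in> C" "s' \<in> C" and x: "x = e \<star> s + f \<star> s'"
        unfolding set_plus_in_def pid_def e f by auto
      have fs: "f \<star> s' = e \<star> (f \<star> s') + g \<star> s'" unfolding g_def using e f s
        by (simp add: diffr assoc one_l)
      have gs: "g \<star> s' = g' \<star> (g \<star> s')" using g'g gC g'C s by (simp add: assoc[symmetric])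
      have hE: "h \<star> (e \<star> w) = e \<star> w" if "w \<in> C" for w using assoc[of h e w] he hC e that by simp
      have hG: "h \<star> (g' \<star> w) = g' \<star> w" if "w \<in> C" for w using assoc[of h g' w] hg' hC g'C that by simp
      have "x = e \<star> s + e \<star> (f \<star> s') + g' \<star> (g \<star> s')" using x fs gs by (simp add: add.assoc)
      also have "\<dots> = h \<star> (e \<star> s) + h \<star> (e \<star> (f \<star> s')) + h \<star> (g' \<star> (g \<star> s'))"
        using hE hG s f gC by simp
      also have "\<dots> = h \<star> (e \<star> s + e \<star> (f \<star> s') + g' \<star> (g \<star> s'))"
        using e f s hC g'C gC by (simp add: distl)
      finally show "x \<in> pid h" unfolding pid_def using e f s g'C gC by auto
    qed
    show "pid h \<subseteq> set_plus_in (+) A B"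
    proof
      fix x assume "x \<in> pid h"
      then obtain s where s: "s \<in> C" and x: "x = h \<star> s" unfolding pid_def by auto
      define t where "t = y \<star> (one - e)"
      have tC: "t \<in> C" using t_def y e by simp
      have "g' \<star> (one - e) = f \<star> t - e \<star> (f \<star> t)" unfolding g'_def g_def t_def using e f y
        by (simp add: assoc diffr one_l)
      hence "x = e \<star> s + (f \<star> t - e \<star> (f \<star> t)) \<star> s" unfolding x h_def using e s g'C f tC
        by (simp add: distr)
      also have "\<dots> = e \<star> (s - f \<star> (t \<star> s)) + f \<star> (t \<star> s)" using e f s tC
        by (simp add: diffr diffl assoc)
      finally have x2: "x = e \<star> (s - f \<star> (t \<star> s)) + f \<star> (t \<star> s)" .
      have "s - f \<star> (t \<star> s) \<in> C" "t \<star> s \<in> C" using e f s tC by auto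
      thus "x \<in> set_plus_in (+) A B" unfolding set_plus_in_def pid_def e(3) f(3) using x2 by blast
    qed
  qed
  thus "right_summand_in C (+) 0 (\<star>) (set_plus_in (+) A B)" using idem_summand hC hh by simp
qed

lemma opp: "aring C (\<lambda>x y. y \<star> x) one"
  by unfold_locales (auto simp: zero_in one_in add_in uminus_in mult_in assoc distl distr one_l one_r)

lemma regular_SSP_both:
  assumes reg: "\<forall>a\<in>C. \<exists>b\<in>C. a \<star> b \<star> a = a"
  shows "SSP_in C (+) 0 (\<star>)"
proof -
  have "right_SSP_in C (+) 0 (\<lambda>x y. y \<star> x)"
    using aring.regular_SSP[OF opp] reg assoc mult_in by metis
  thus ?thesis unfolding SSP_in_def left_SSP_in_def using regular_SSP reg by simp
qed

end


definition idm :: "'l set \<Rightarrow> 'l \<Rightarrow> 'l \<Rightarrow> 'a::ring_1" where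
  "idm \<Lambda> = (\<lambda>i j. if i = j \<and> i \<in> \<Lambda> then 1 else 0)"

lemma cfm_out: "M \<in> cfm \<Lambda> \<Longrightarrow> i \<notin> \<Lambda> \<or> j \<notin> \<Lambda> \<Longrightarrow> M i j = 0"
  unfolding cfm_def by auto

lemma cfm_fin: "M \<in> cfm \<Lambda> \<Longrightarrow> finite {i\<in>\<Lambda>. M i j \<noteq> 0}"
  unfolding cfm_def by (cases "j \<in> \<Lambda>") auto

lemma cfmI: "(\<And>i j. i \<notin> \<Lambda> \<or> j \<notin> \<Lambda> \<Longrightarrow> M i j = 0) \<Longrightarrow> (\<And>j. j \<in> \<Lambda> \<Longrightarrow> finite {i\<in>\<Lambda>. M i j \<noteq> 0}) \<Longrightarrow> M \<in> cfm \<Lambda>"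
  unfolding cfm_def by auto

lemma sum_gen:
  assumes N: "N \<in> cfm \<Lambda>" and J: "finite J" "{j\<in>\<Lambda>. N j k \<noteq> 0} \<subseteq> J"
  shows "cfm_mult \<Lambda> M N i k = (\<Sum>j\<in>J. M i j * N j k)"
  unfolding cfm_mult_def
proof (rule sum.mono_neutral_left[OF J(1) J(2)])
  show "\<forall>j\<in>J - {j \<in> \<Lambda>. N j k \<noteq> 0}. M i j * N j k = 0"
  proof
    fix j assume "j \<in> J - {j \<in> \<Lambda>. N j k \<noteq> 0}"
    hence "N j k = 0" using cfm_out[OF N, of j k] by auto
    thus "M i j * N j k = 0" by simp
  qed
qed

lemma mult_in_cfm:
  assumes M: "M \<in> cfm \<Lambda>" and N: "N \<in> cfm \<Lambda>"
  shows "cfm_mult \<Lambda> M N \<in> cfm \<Lambda>"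
proof (rule cfmI)
  fix i k assume "i \<notin> \<Lambda> \<or> k \<notin> \<Lambda>"
  thus "cfm_mult \<Lambda> M N i k = 0" unfolding cfm_mult_def using cfm_out[OF M] cfm_out[OF N]
    by (auto intro: sum.neutral)
next
  fix k
  let ?S = "{j\<in>\<Lambda>. N j k \<noteq> 0}"
  have "{i\<in>\<Lambda>. cfm_mult \<Lambda> M N i k \<noteq> 0} \<subseteq> (\<Union>j\<in>?S. {i\<in>\<Lambda>. M i j \<noteq> 0})"
  proof
    fix i assume "i \<in> {i\<in>\<Lambda>. cfm_mult \<Lambda> M N i k \<noteq> 0}"
    hence "i \<in> \<Lambda>" "(\<Sum>j\<in>?S. M i j * N j k) \<noteq> 0" unfolding cfm_mult_def by auto
    then obtain j where "j \<in> ?S" "M i j * N j k \<noteq> 0" using sum.neutral by (metis (no_types, lifting))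
    thus "i \<in> (\<Union>j\<in>?S. {i\<in>\<Lambda>. M i j \<noteq> 0})" using \<open>i \<in> \<Lambda>\<close> by auto
  qed
  moreover have "finite (\<Union>j\<in>?S. {i\<in>\<Lambda>. M i j \<noteq> 0})" using cfm_fin[OF M] cfm_fin[OF N] by auto
  ultimately show "finite {i\<in>\<Lambda>. cfm_mult \<Lambda> M N i k \<noteq> 0}" by (rule finite_subset)
qed

lemma plus_in_cfm: "(M :: 'l \<Rightarrow> 'l \<Rightarrow> 'a::ring_1) \<in> cfm \<Lambda> \<Longrightarrow> N \<in> cfm \<Lambda> \<Longrightarrow> M + N \<in> cfm \<Lambda>"
proof (rule cfmI)
  fix i j assume "M \<in> cfm \<Lambda>" "N \<in> cfm \<Lambda>" "i \<notin> \<Lambda> \<or> j \<notin> \<Lambda>"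
  thus "(M + N) i j = 0" using cfm_out[of M \<Lambda> i j] cfm_out[of N \<Lambda> i j] by (simp add: plus_fun_def)
next
  fix j assume M: "M \<in> cfm \<Lambda>" and N: "N \<in> cfm \<Lambda>"
  have "{i\<in>\<Lambda>. (M + N) i j \<noteq> 0} \<subseteq> {i\<in>\<Lambda>. M i j \<noteq> 0} \<union> {i\<in>\<Lambda>. N i j \<noteq> 0}" by (auto simp: plus_fun_def)
  thus "finite {i\<in>\<Lambda>. (M + N) i j \<noteq> 0}" using cfm_fin[OF M] cfm_fin[OF N] by (meson finite_UnI finite_subset)
qed

lemma uminus_in_cfm: "(M :: 'l \<Rightarrow> 'l \<Rightarrow> 'a::ring_1) \<in> cfm \<Lambda> \<Longrightarrow> - M \<in> cfm \<Lambda>"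
  using cfm_out[of M \<Lambda>] cfm_fin[of M \<Lambda>] by (intro cfmI) auto

lemma zero_in_cfm: "(0 :: 'l \<Rightarrow> 'l \<Rightarrow> 'a::ring_1) \<in> cfm \<Lambda>"
  by (intro cfmI) auto

lemma idm_in_cfm: "(idm \<Lambda> :: 'l \<Rightarrow> 'l \<Rightarrow> 'a::ring_1) \<in> cfm \<Lambda>"
proof (rule cfmI)
  fix j
  have "{i\<in>\<Lambda>. idm \<Lambda> i j \<noteq> (0::'a)} \<subseteq> {j}" by (auto simp: idm_def)
  thus "finite {i\<in>\<Lambda>. idm \<Lambda> i j \<noteq> (0::'a)}" by (rule finite_subset) auto
qed (auto simp: idm_def)

lemma mult_assoc_cfm:
  assumes M: "M \<in> cfm \<Lambda>" and N: "N \<in> cfm \<Lambda>" and P: "P \<in> cfm \<Lambda>"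
  shows "cfm_mult \<Lambda> (cfm_mult \<Lambda> M N) P = cfm_mult \<Lambda> M (cfm_mult \<Lambda> N P)"
proof (intro ext)
  fix i l
  define K where "K = {k\<in>\<Lambda>. P k l \<noteq> 0}"
  define J where "J = (\<Union>k\<in>K. {j\<in>\<Lambda>. N j k \<noteq> 0})"
  have fK: "finite K" using cfm_fin[OF P] K_def by simp
  have fJ: "finite J" using fK cfm_fin[OF N] J_def by auto
  have "cfm_mult \<Lambda> (cfm_mult \<Lambda> M N) P i l = (\<Sum>k\<in>K. cfm_mult \<Lambda> M N i k * P k l)"
    unfolding cfm_mult_def K_def by simp
  also have "\<dots> = (\<Sum>k\<in>K. (\<Sum>j\<in>J. M i j * N j k) * P k l)"
  proof (rule sum.cong[OF refl])
    fix k assume "k \<in> K"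
    hence "{j\<in>\<Lambda>. N j k \<noteq> 0} \<subseteq> J" unfolding J_def by auto
    thus "cfm_mult \<Lambda> M N i k * P k l = (\<Sum>j\<in>J. M i j * N j k) * P k l"
      using sum_gen[OF N fJ] by simp
  qed
  also have "\<dots> = (\<Sum>k\<in>K. \<Sum>j\<in>J. M i j * N j k * P k l)"
    by (simp add: sum_distrib_right)
  also have "\<dots> = (\<Sum>j\<in>J. \<Sum>k\<in>K. M i j * N j k * P k l)"
    by (rule sum.swap)
  also have "\<dots> = (\<Sum>j\<in>J. M i j * (\<Sum>k\<in>K. N j k * P k l))"
    by (simp add: sum_distrib_left mult.assoc)
  also have "\<dots> = (\<Sum>j\<in>J. M i j * cfm_mult \<Lambda> N P j l)"
    unfolding cfm_mult_def K_def by simp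
  also have "\<dots> = cfm_mult \<Lambda> M (cfm_mult \<Lambda> N P) i l"
  proof (rule sum_gen[symmetric, OF mult_in_cfm[OF N P] fJ])
    show "{j\<in>\<Lambda>. cfm_mult \<Lambda> N P j l \<noteq> 0} \<subseteq> J"
    proof
      fix j assume "j \<in> {j\<in>\<Lambda>. cfm_mult \<Lambda> N P j l \<noteq> 0}"
      hence "j \<in> \<Lambda>" "(\<Sum>k\<in>K. N j k * P k l) \<noteq> 0" unfolding cfm_mult_def K_def by auto
      then obtain k where "k \<in> K" "N j k * P k l \<noteq> 0" using sum.neutral by (metis (no_types, lifting))
      hence "k \<in> K" "N j k \<noteq> 0" by auto
      thus "j \<in> J" unfolding J_def using \<open>j \<in> \<Lambda>\<close> by auto
    qed
  qed
  finally show "cfm_mult \<Lambda> (cfm_mult \<Lambda> M N) P i l = cfm_mult \<Lambda> M (cfm_mult \<Lambda> N P) i l" .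
qed

lemma distl_cfm:
  assumes M: "M \<in> cfm \<Lambda>" and N: "N \<in> cfm \<Lambda>" and P: "P \<in> cfm \<Lambda>"
  shows "cfm_mult \<Lambda> M (N + P) = cfm_mult \<Lambda> M N + cfm_mult \<Lambda> M P"
proof (intro ext)
  fix i k
  define J where "J = {j\<in>\<Lambda>. N j k \<noteq> 0} \<union> {j\<in>\<Lambda>. P j k \<noteq> 0}"
  have fJ: "finite J" using cfm_fin[OF N] cfm_fin[OF P] J_def by auto
  have "cfm_mult \<Lambda> M (N + P) i k = (\<Sum>j\<in>J. M i j * (N + P) j k)"
    by (rule sum_gen[OF plus_in_cfm[OF N P] fJ]) (auto simp: J_def plus_fun_def)
  also have "\<dots> = (\<Sum>j\<in>J. M i j * N j k) + (\<Sum>j\<in>J. M i j * P j k)"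
    by (simp add: plus_fun_def distrib_left sum.distrib)
  also have "\<dots> = cfm_mult \<Lambda> M N i k + cfm_mult \<Lambda> M P i k"
    using sum_gen[OF N fJ, of k M i] sum_gen[OF P fJ, of k M i] J_def by auto
  finally show "cfm_mult \<Lambda> M (N + P) i k = (cfm_mult \<Lambda> M N + cfm_mult \<Lambda> M P) i k"
    by (simp add: plus_fun_def)
qed

lemma distr_cfm:
  shows "cfm_mult \<Lambda> (M + N) P = cfm_mult \<Lambda> M P + cfm_mult \<Lambda> N P"
  by (intro ext) (simp add: cfm_mult_def plus_fun_def distrib_right sum.distrib)

lemma one_l_cfm: "M \<in> cfm \<Lambda> \<Longrightarrow> cfm_mult \<Lambda> (idm \<Lambda>) M = M"
proof (intro ext)
  fix i k assume M: "M \<in> cfm \<Lambda>"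
  let ?S = "{j\<in>\<Lambda>. M j k \<noteq> 0}"
  have "cfm_mult \<Lambda> (idm \<Lambda>) M i k = (\<Sum>j\<in>?S. if j = i then M i k else 0)"
    unfolding cfm_mult_def idm_def by (rule sum.cong) auto
  also have "\<dots> = (if i \<in> ?S then M i k else 0)"
    using cfm_fin[OF M] by (simp add: sum.delta')
  also have "\<dots> = M i k" using cfm_out[OF M, of i k] by auto
  finally show "cfm_mult \<Lambda> (idm \<Lambda>) M i k = M i k" .
qed

lemma one_r_cfm: "(M :: 'l \<Rightarrow> 'l \<Rightarrow> 'a::ring_1) \<in> cfm \<Lambda> \<Longrightarrow> cfm_mult \<Lambda> M (idm \<Lambda>) = M"
proof (intro ext)
  fix i k assume M: "M \<in> cfm \<Lambda>"
  have "cfm_mult \<Lambda> M (idm \<Lambda>) i k = (\<Sum>j\<in>{j\<in>\<Lambda>. idm \<Lambda> j k \<noteq> (0::'a)}. M i j * idm \<Lambda> j k)"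
    unfolding cfm_mult_def by simp
  also have "{j\<in>\<Lambda>. idm \<Lambda> j k \<noteq> (0::'a)} = (if k \<in> \<Lambda> then {k} else {})" by (auto simp: idm_def)
  finally show "cfm_mult \<Lambda> M (idm \<Lambda>) i k = M i k" using cfm_out[OF M, of i k]
    by (auto simp: idm_def)
qed

lemma aring_cfm: "aring (cfm \<Lambda> :: ('l \<Rightarrow> 'l \<Rightarrow> 'a::ring_1) set) (cfm_mult \<Lambda>) (idm \<Lambda>)"
  by unfold_locales (auto simp: zero_in_cfm idm_in_cfm plus_in_cfm uminus_in_cfm mult_in_cfm
      mult_assoc_cfm distl_cfm distr_cfm one_l_cfm one_r_cfm)

lemma cfm_add_eq: "cfm_add = (+)"
  by (intro ext) (simp add: cfm_add_def plus_fun_def)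

lemma cfm_zero_eq: "cfm_zero = 0"
  by (intro ext) (simp add: cfm_zero_def)


definition vecs :: "'l set \<Rightarrow> ('l \<Rightarrow> 'a::ring_1) set" where
  "vecs \<Lambda> = {v. (\<forall>i. i \<notin> \<Lambda> \<longrightarrow> v i = 0) \<and> finite {i. v i \<noteq> 0}}"

definition submod :: "'l set \<Rightarrow> ('l \<Rightarrow> 'a::ring_1) set \<Rightarrow> bool" where
  "submod \<Lambda> U \<longleftrightarrow> U \<subseteq> vecs \<Lambda> \<and> 0 \<in> U \<and> (\<forall>x\<in>U. \<forall>y\<in>U. x + y \<in> U) \<and> (\<forall>x\<in>U. \<forall>r. (\<lambda>i. x i * r) \<in> U)"

definition mv :: "'l set \<Rightarrow> ('l \<Rightarrow> 'l \<Rightarrow> 'a::ring_1) \<Rightarrow> ('l \<Rightarrow> 'a) \<Rightarrow> ('l \<Rightarrow> 'a)" where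
  "mv \<Lambda> M v = (\<lambda>i. \<Sum>j\<in>{j\<in>\<Lambda>. v j \<noteq> 0}. M i j * v j)"

definition dl :: "'l \<Rightarrow> 'a::ring_1 \<Rightarrow> ('l \<Rightarrow> 'a)" where
  "dl j r = (\<lambda>i. if i = j then r else 0)"

lemma submod_neg: "submod \<Lambda> U \<Longrightarrow> x \<in> U \<Longrightarrow> - x \<in> U"
proof -
  assume U: "submod \<Lambda> U" and x: "x \<in> U"
  have "(\<lambda>i. x i * (-1)) \<in> U" using U x unfolding submod_def by blast
  moreover have "(\<lambda>i. x i * (-1)) = - x" by (intro ext) simp
  ultimately show ?thesis by simp
qed

lemma submod_add: "submod \<Lambda> U \<Longrightarrow> x \<in> U \<Longrightarrow> y \<in> U \<Longrightarrow> x + y \<in> U"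
  unfolding submod_def by blast

lemma submod_diff: "submod \<Lambda> U \<Longrightarrow> x \<in> U \<Longrightarrow> y \<in> U \<Longrightarrow> x - y \<in> U"
  using submod_add submod_neg by (metis diff_conv_add_uminus)

lemma submod_zero: "submod \<Lambda> U \<Longrightarrow> 0 \<in> U"
  unfolding submod_def by blast

lemma submod_smult: "submod \<Lambda> U \<Longrightarrow> x \<in> U \<Longrightarrow> (\<lambda>i. x i * r) \<in> U"
  unfolding submod_def by blast

lemma submod_lincomb:
  assumes U: "submod \<Lambda> U" and K: "finite K"
  shows "(\<forall>k\<in>K. g k \<in> U) \<Longrightarrow> (\<lambda>i. \<Sum>k\<in>K. g k i * s k) \<in> U"
  using K
proof (induction K rule: finite_induct)
  case empty
  then show ?case using submod_zero[OF U] by (simp add: zero_fun_def)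
next
  case (insert k K)
  have "(\<lambda>i. \<Sum>k\<in>insert k K. g k i * s k) = (\<lambda>i. g k i * s k) + (\<lambda>i. \<Sum>k\<in>K. g k i * s k)"
    using insert.hyps by (intro ext) (simp add: plus_fun_def)
  moreover have "(\<lambda>i. g k i * s k) \<in> U" using insert.prems submod_smult[OF U] by auto
  ultimately show ?case using insert submod_add[OF U] by auto
qed

lemma vecs_fin: "v \<in> vecs \<Lambda> \<Longrightarrow> finite {i. v i \<noteq> 0}"
  unfolding vecs_def by auto

lemma vecs_out: "v \<in> vecs \<Lambda> \<Longrightarrow> i \<notin> \<Lambda> \<Longrightarrow> v i = 0"
  unfolding vecs_def by auto

lemma mv_gen:
  assumes v: "v \<in> vecs \<Lambda>" and J: "finite J" "{j. v j \<noteq> 0} \<subseteq> J"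
  shows "mv \<Lambda> M v i = (\<Sum>j\<in>J. M i j * v j)"
  unfolding mv_def
proof (rule sum.mono_neutral_left[OF J(1)])
  show "{j \<in> \<Lambda>. v j \<noteq> 0} \<subseteq> J" using J by auto
  show "\<forall>j\<in>J - {j \<in> \<Lambda>. v j \<noteq> 0}. M i j * v j = 0"
  proof
    fix j assume "j \<in> J - {j \<in> \<Lambda>. v j \<noteq> 0}"
    hence "v j = 0" using vecs_out[OF v, of j] by auto
    thus "M i j * v j = 0" by simp
  qed
qed

lemma mv_in:
  assumes M: "M \<in> cfm \<Lambda>" and v: "v \<in> vecs \<Lambda>"
  shows "mv \<Lambda> M v \<in> vecs \<Lambda>"
  unfolding vecs_def
proof (intro CollectI conjI allI impI)
  fix i assume "i \<notin> \<Lambda>"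
  thus "mv \<Lambda> M v i = 0" unfolding mv_def using cfm_out[OF M] by (auto intro: sum.neutral)
next
  let ?S = "{j\<in>\<Lambda>. v j \<noteq> 0}"
  have "{i. mv \<Lambda> M v i \<noteq> 0} \<subseteq> (\<Union>j\<in>?S. {i\<in>\<Lambda>. M i j \<noteq> 0})"
  proof
    fix i assume "i \<in> {i. mv \<Lambda> M v i \<noteq> 0}"
    hence "(\<Sum>j\<in>?S. M i j * v j) \<noteq> 0" unfolding mv_def by auto
    then obtain j where "j \<in> ?S" "M i j * v j \<noteq> 0" using sum.neutral by (metis (no_types, lifting))
    moreover have "i \<in> \<Lambda>"
    proof (rule ccontr)
      assume "i \<notin> \<Lambda>"
      hence "M i j = 0" using cfm_out[OF M, of i j] by simp
      thus False using \<open>M i j * v j \<noteq> 0\<close> by simp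
    qed
    ultimately show "i \<in> (\<Union>j\<in>?S. {i\<in>\<Lambda>. M i j \<noteq> 0})" by auto
  qed
  moreover have "finite ?S" using vecs_fin[OF v] by auto
  ultimately show "finite {i. mv \<Lambda> M v i \<noteq> 0}" using cfm_fin[OF M]
    by (meson finite_UN_I finite_subset)
qed

lemma vecs_add:
  assumes v: "v \<in> vecs \<Lambda>" and w: "w \<in> vecs \<Lambda>"
  shows "v + w \<in> vecs \<Lambda>"
proof -
  have "{i. (v + w) i \<noteq> 0} \<subseteq> {i. v i \<noteq> 0} \<union> {i. w i \<noteq> 0}" by auto
  hence "finite {i. (v + w) i \<noteq> 0}" using vecs_fin[OF v] vecs_fin[OF w] by (meson finite_Un finite_subset)
  moreover have "\<forall>i. i \<notin> \<Lambda> \<longrightarrow> (v + w) i = 0" using vecs_out[OF v] vecs_out[OF w] by simp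
  ultimately show ?thesis unfolding vecs_def by blast
qed

lemma mv_add:
  assumes v: "v \<in> vecs \<Lambda>" and w: "w \<in> vecs \<Lambda>"
  shows "mv \<Lambda> M (v + w) = mv \<Lambda> M v + mv \<Lambda> M w"
proof (intro ext)
  fix i
  define J where "J = {j. v j \<noteq> 0} \<union> {j. w j \<noteq> 0}"
  have fJ: "finite J" using vecs_fin[OF v] vecs_fin[OF w] J_def by auto
  have vw: "v + w \<in> vecs \<Lambda>" using v w by (rule vecs_add)
  have "mv \<Lambda> M (v + w) i = (\<Sum>j\<in>J. M i j * (v + w) j)"
    by (rule mv_gen[OF vw fJ]) (auto simp: J_def)
  also have "\<dots> = (\<Sum>j\<in>J. M i j * v j) + (\<Sum>j\<in>J. M i j * w j)"
    by (simp add: distrib_left sum.distrib)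
  also have "\<dots> = mv \<Lambda> M v i + mv \<Lambda> M w i"
    using mv_gen[OF v fJ, of M i] mv_gen[OF w fJ, of M i] J_def by auto
  finally show "mv \<Lambda> M (v + w) i = (mv \<Lambda> M v + mv \<Lambda> M w) i" by simp
qed

lemma vecs_smult: "v \<in> vecs \<Lambda> \<Longrightarrow> (\<lambda>i. v i * r) \<in> vecs \<Lambda>"
  unfolding vecs_def
proof (intro CollectI conjI allI impI)
  assume v: "v \<in> {v. (\<forall>i. i \<notin> \<Lambda> \<longrightarrow> v i = 0) \<and> finite {i. v i \<noteq> 0}}"
  have "{i. v i * r \<noteq> 0} \<subseteq> {i. v i \<noteq> 0}" by auto
  thus "finite {i. v i * r \<noteq> 0}" using v finite_subset by blast
qed auto

lemma mv_smult:
  assumes v: "v \<in> vecs \<Lambda>"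
  shows "mv \<Lambda> M (\<lambda>i. v i * r) = (\<lambda>i. mv \<Lambda> M v i * r)"
proof (intro ext)
  fix i
  have "mv \<Lambda> M (\<lambda>i. v i * r) i = (\<Sum>j\<in>{j. v j \<noteq> 0}. M i j * (v j * r))"
    by (rule mv_gen[OF vecs_smult[OF v] vecs_fin[OF v]]) auto
  also have "\<dots> = (\<Sum>j\<in>{j. v j \<noteq> 0}. M i j * v j) * r"
    by (simp add: sum_distrib_right mult.assoc)
  also have "\<dots> = mv \<Lambda> M v i * r"
    using mv_gen[OF v vecs_fin[OF v], of M i] by simp
  finally show "mv \<Lambda> M (\<lambda>i. v i * r) i = mv \<Lambda> M v i * r" .
qed

lemma zero_vecs: "0 \<in> vecs \<Lambda>"
  unfolding vecs_def by auto

lemma mv_zero: "mv \<Lambda> M 0 = 0"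
  unfolding mv_def by (intro ext) simp

lemma image_submod:
  assumes M: "M \<in> cfm \<Lambda>"
  shows "submod \<Lambda> {mv \<Lambda> M v |v. v \<in> vecs \<Lambda>}"
  unfolding submod_def
proof (intro conjI ballI allI)
  show "{mv \<Lambda> M v |v. v \<in> vecs \<Lambda>} \<subseteq> vecs \<Lambda>" using mv_in[OF M] by auto
  have "0 = mv \<Lambda> M 0" using mv_zero by simp
  thus "0 \<in> {mv \<Lambda> M v |v. v \<in> vecs \<Lambda>}" using zero_vecs by blast
next
  fix x y assume "x \<in> {mv \<Lambda> M v |v. v \<in> vecs \<Lambda>}" "y \<in> {mv \<Lambda> M v |v. v \<in> vecs \<Lambda>}"
  then obtain v w where "v \<in> vecs \<Lambda>" "w \<in> vecs \<Lambda>" "x = mv \<Lambda> M v" "y = mv \<Lambda> M w" by auto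
  moreover have "v + w \<in> vecs \<Lambda>" using vecs_add calculation by blast
  ultimately have "x + y = mv \<Lambda> M (v + w) \<and> v + w \<in> vecs \<Lambda>" using mv_add[of v \<Lambda> w M] by simp
  thus "x + y \<in> {mv \<Lambda> M v |v. v \<in> vecs \<Lambda>}" by blast
next
  fix x r assume "x \<in> {mv \<Lambda> M v |v. v \<in> vecs \<Lambda>}"
  then obtain v where "v \<in> vecs \<Lambda>" "x = mv \<Lambda> M v" by auto
  hence "(\<lambda>i. x i * r) = mv \<Lambda> M (\<lambda>i. v i * r) \<and> (\<lambda>i. v i * r) \<in> vecs \<Lambda>" using mv_smult[of v \<Lambda> M r] vecs_smult[of v \<Lambda> r] by simp
  thus "(\<lambda>i. x i * r) \<in> {mv \<Lambda> M v |v. v \<in> vecs \<Lambda>}" by blast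
qed


lemma dl_vecs: "j \<in> \<Lambda> \<Longrightarrow> dl j r \<in> vecs \<Lambda>"
proof -
  assume j: "j \<in> \<Lambda>"
  have "{i. dl j r i \<noteq> 0} \<subseteq> {j}" by (auto simp: dl_def)
  hence "finite {i. dl j r i \<noteq> 0}" by (rule finite_subset) auto
  thus ?thesis using j unfolding vecs_def dl_def by auto
qed

lemma dl_add: "dl j (r + s) = dl j r + dl j s"
  by (intro ext) (simp add: dl_def)

lemma dl_mult: "dl j (r * t) = (\<lambda>i. dl j r i * t)"
  by (intro ext) (simp add: dl_def)

lemma dl_zero: "dl j 0 = 0"
  by (intro ext) (simp add: dl_def)

lemma dl_sum: "finite F \<Longrightarrow> dl j (\<Sum>I\<in>F. f I) = (\<lambda>i. \<Sum>I\<in>F. dl j (f I) i * 1)"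
  by (intro ext) (simp add: dl_def)

lemma vec_decomp:
  assumes y: "y \<in> vecs \<Lambda>"
  shows "y = (\<lambda>i. \<Sum>k\<in>{k. y k \<noteq> 0}. dl k (y k) i * 1)"
proof (intro ext)
  fix i
  have "(\<Sum>k\<in>{k. y k \<noteq> 0}. dl k (y k) i * 1) = (\<Sum>k\<in>{k. y k \<noteq> 0}. if k = i then y i else 0)"
    by (rule sum.cong) (auto simp: dl_def)
  also have "\<dots> = y i" using vecs_fin[OF y] by (simp add: sum.delta)
  finally show "y i = (\<Sum>k\<in>{k. y k \<noteq> 0}. dl k (y k) i * 1)" by simp
qed

lemma submod_plus:
  assumes N: "submod \<Lambda> N" and M: "submod \<Lambda> M"
  shows "submod \<Lambda> {n + c |n c. n \<in> N \<and> c \<in> M}"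
  unfolding submod_def
proof (intro conjI ballI allI)
  show "{n + c |n c. n \<in> N \<and> c \<in> M} \<subseteq> vecs \<Lambda>"
    using N M vecs_add unfolding submod_def by blast
  have "(0::'a \<Rightarrow> 'b) = 0 + 0" by simp
  thus "0 \<in> {n + c |n c. n \<in> N \<and> c \<in> M}" using submod_zero[OF N] submod_zero[OF M] by blast
next
  fix x y assume "x \<in> {n + c |n c. n \<in> N \<and> c \<in> M}" "y \<in> {n + c |n c. n \<in> N \<and> c \<in> M}"
  then obtain n c n' c' where "n \<in> N" "c \<in> M" "n' \<in> N" "c' \<in> M" "x = n + c" "y = n' + c'" by blast
  moreover hence "x + y = (n + n') + (c + c')" by (simp add: algebra_simps)
  ultimately show "x + y \<in> {n + c |n c. n \<in> N \<and> c \<in> M}" using submod_add[OF N] submod_add[OF M] by blast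
next
  fix x r assume "x \<in> {n + c |n c. n \<in> N \<and> c \<in> M}"
  then obtain n c where "n \<in> N" "c \<in> M" "x = n + c" by blast
  moreover hence "(\<lambda>i. x i * r) = (\<lambda>i. n i * r) + (\<lambda>i. c i * r)" by (intro ext) (simp add: distrib_right)
  ultimately show "(\<lambda>i. x i * r) \<in> {n + c |n c. n \<in> N \<and> c \<in> M}"
    using submod_smult[OF N] submod_smult[OF M] by blast
qed

lemma complement:
  assumes ss: "semisimple_ring TYPE('a::ring_1)" and N: "submod \<Lambda> (N :: ('l \<Rightarrow> 'a) set)"
  shows "\<exists>Cm. submod \<Lambda> Cm \<and> N \<inter> Cm = {0} \<and> (\<forall>y\<in>vecs \<Lambda>. \<exists>n\<in>N. \<exists>c\<in>Cm. y = n + c)"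
proof -
  define A where "A = {Cm. submod \<Lambda> Cm \<and> N \<inter> Cm = {0}}"
  have "\<forall>Ch\<in>chains A. \<exists>U\<in>A. \<forall>X\<in>Ch. X \<subseteq> U"
  proof
    fix Ch assume Ch: "Ch \<in> chains A"
    define U where "U = insert 0 (\<Union>Ch)"
    have sub: "\<forall>X\<in>Ch. submod \<Lambda> X \<and> N \<inter> X = {0}" using chainsD2[OF Ch] A_def by auto
    have "submod \<Lambda> U"
      unfolding submod_def
    proof (intro conjI ballI allI)
      show "U \<subseteq> vecs \<Lambda>" using sub zero_vecs unfolding U_def submod_def by auto
      show "0 \<in> U" unfolding U_def by simp
    next
      fix x y assume x: "x \<in> U" and y: "y \<in> U"
      show "x + y \<in> U"
      proof (cases "x = 0")
        case True then show ?thesis using y by simp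
      next
        case False
        then obtain X where X: "X \<in> Ch" "x \<in> X" using x U_def by auto
        show ?thesis
        proof (cases "y = 0")
          case True then show ?thesis using x by simp
        next
          case False
          then obtain Y where Y: "Y \<in> Ch" "y \<in> Y" using y U_def by auto
          have sX: "submod \<Lambda> X" and sY: "submod \<Lambda> Y" using sub X(1) Y(1) by auto
          from chainsD[OF Ch X(1) Y(1)] have "x + y \<in> X \<or> x + y \<in> Y"
          proof
            assume "X \<subseteq> Y"
            hence "x + y \<in> Y" using submod_add[OF sY] X(2) Y(2) by blast
            thus ?thesis by simp
          next
            assume "Y \<subseteq> X"
            hence "x + y \<in> X" using submod_add[OF sX] X(2) Y(2) by blast
            thus ?thesis by simp
          qed
          thus ?thesis using X Y U_def by auto
        qed
      qed
    next
      fix x r assume x: "x \<in> U"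
      show "(\<lambda>i. x i * r) \<in> U"
      proof (cases "x = 0")
        case True
        hence "(\<lambda>i. x i * r) = 0" by (intro ext) simp
        then show ?thesis unfolding U_def by simp
      next
        case False then obtain X where "X \<in> Ch" "x \<in> X" using x U_def by auto
        then show ?thesis using sub submod_smult U_def by blast
      qed
    qed
    moreover have "N \<inter> U = {0}" using sub submod_zero[OF N] unfolding U_def by auto
    ultimately show "\<exists>U\<in>A. \<forall>X\<in>Ch. X \<subseteq> U" unfolding A_def U_def by auto
  qed
  then obtain M where M: "M \<in> A" and max: "\<forall>X\<in>A. M \<subseteq> X \<longrightarrow> X = M"
    using Zorn_Lemma2[of A] by blast
  have Msub: "submod \<Lambda> M" and NM: "N \<inter> M = {0}" using M A_def by auto
  define P where "P = {n + c |n c. n \<in> N \<and> c \<in> M}"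
  have Psub: "submod \<Lambda> P" unfolding P_def using submod_plus[OF N Msub] .
  have NP: "n \<in> P" if "n \<in> N" for n
  proof -
    have "n = n + 0" by simp
    thus ?thesis unfolding P_def using that submod_zero[OF Msub] by blast
  qed
  have MP: "c \<in> P" if "c \<in> M" for c
  proof -
    have "c = 0 + c" by simp
    thus ?thesis unfolding P_def using that submod_zero[OF N] by blast
  qed
  have all: "\<forall>y\<in>vecs \<Lambda>. y \<in> P"
  proof (rule ccontr)
    assume "\<not> (\<forall>y\<in>vecs \<Lambda>. y \<in> P)"
    then obtain y where y: "y \<in> vecs \<Lambda>" "y \<notin> P" by auto
    have "\<exists>j\<in>\<Lambda>. dl j (y j) \<notin> P"
    proof (rule ccontr)
      assume "\<not> (\<exists>j\<in>\<Lambda>. dl j (y j) \<notin> P)"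
      hence "\<forall>k\<in>{k. y k \<noteq> 0}. dl k (y k) \<in> P" using vecs_out[OF y(1)] by auto
      hence "(\<lambda>i. \<Sum>k\<in>{k. y k \<noteq> 0}. dl k (y k) i * 1) \<in> P"
        using submod_lincomb[OF Psub vecs_fin[OF y(1)], of "\<lambda>k. dl k (y k)" "\<lambda>k. 1"] by simp
      thus False using vec_decomp[OF y(1)] y(2) by simp
    qed
    then obtain j where j: "j \<in> \<Lambda>" "dl j (y j) \<notin> P" by blast
    obtain F f where F: "finite F" "\<forall>I\<in>F. minimal_right_ideal I \<and> f I \<in> I" "y j = (\<Sum>I\<in>F. f I)"
      using ss unfolding semisimple_ring_def by blast
    have "\<exists>I\<in>F. dl j (f I) \<notin> P"
    proof (rule ccontr)
      assume "\<not> (\<exists>I\<in>F. dl j (f I) \<notin> P)"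
      hence "(\<lambda>i. \<Sum>I\<in>F. dl j (f I) i * 1) \<in> P"
        using submod_lincomb[OF Psub F(1), of "\<lambda>I. dl j (f I)" "\<lambda>k. 1"] by simp
      thus False using dl_sum[OF F(1), of j f] F(3) j(2) by simp
    qed
    then obtain I where I: "I \<in> F" "dl j (f I) \<notin> P" by blast
    have Imin: "minimal_right_ideal I" and fI: "f I \<in> I" using F(2) I(1) by auto
    have Iid: "right_ideal I" using Imin unfolding minimal_right_ideal_def by blast
    hence I0: "0 \<in> I" and Iadd: "\<And>r s. r \<in> I \<Longrightarrow> s \<in> I \<Longrightarrow> r + s \<in> I"
      and Imul: "\<And>r t. r \<in> I \<Longrightarrow> r * t \<in> I"
      unfolding right_ideal_def right_ideal_in_def by auto
    define I' where "I' = {r\<in>I. dl j r \<in> P}"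
    have "right_ideal I'"
      unfolding right_ideal_def right_ideal_in_def
    proof (intro conjI ballI)
      show "I' \<subseteq> UNIV" by simp
      show "0 \<in> I'" unfolding I'_def using I0 submod_zero[OF Psub] by (simp add: dl_zero)
    next
      fix x y assume "x \<in> I'" "y \<in> I'"
      moreover have "dl j (x + y) = dl j x + dl j y" by (rule dl_add)
      ultimately show "x + y \<in> I'" unfolding I'_def using Iadd submod_add[OF Psub] by auto
    next
      fix x r assume "x \<in> I'"
      moreover have "dl j (x * r) = (\<lambda>i. dl j x i * r)" by (rule dl_mult)
      ultimately show "x * r \<in> I'" unfolding I'_def using Imul submod_smult[OF Psub] by auto
    qed
    moreover have "I' \<subseteq> I" unfolding I'_def by auto
    ultimately have "I' = {0} \<or> I' = I" using Imin unfolding minimal_right_ideal_def by blast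
    moreover have "f I \<notin> I'" unfolding I'_def using I(2) by simp
    ultimately have I'0: "I' = {0}" using fI by blast
    define M' where "M' = {c + dl j r |c r. c \<in> M \<and> r \<in> I}"
    have M'sub: "submod \<Lambda> M'"
      unfolding submod_def
    proof (intro conjI ballI allI)
      show "M' \<subseteq> vecs \<Lambda>" unfolding M'_def using Msub vecs_add dl_vecs[OF j(1)] unfolding submod_def by blast
      have "(0::'l \<Rightarrow> 'a) = 0 + dl j 0" by (simp add: dl_zero)
      thus "0 \<in> M'" unfolding M'_def using submod_zero[OF Msub] I0 by blast
    next
      fix x y assume "x \<in> M'" "y \<in> M'"
      then obtain c r c' r' where "c \<in> M" "r \<in> I" "c' \<in> M" "r' \<in> I" "x = c + dl j r" "y = c' + dl j r'"
        unfolding M'_def by blast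
      moreover hence "x + y = (c + c') + dl j (r + r')" by (simp add: dl_add algebra_simps)
      ultimately show "x + y \<in> M'" unfolding M'_def using submod_add[OF Msub] Iadd by blast
    next
      fix x t assume "x \<in> M'"
      then obtain c r where "c \<in> M" "r \<in> I" "x = c + dl j r" unfolding M'_def by blast
      moreover hence "(\<lambda>i. x i * t) = (\<lambda>i. c i * t) + dl j (r * t)"
        by (intro ext) (simp add: dl_def distrib_right)
      ultimately show "(\<lambda>i. x i * t) \<in> M'" unfolding M'_def using submod_smult[OF Msub] Imul by blast
    qed
    have NM': "N \<inter> M' = {0}"
    proof
      show "N \<inter> M' \<subseteq> {0}"
      proof
        fix n assume "n \<in> N \<inter> M'"
        then obtain c r where n: "n \<in> N" "c \<in> M" "r \<in> I" "n = c + dl j r" unfolding M'_def by blast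
        have "dl j r = n + (- c)" using n(4) by simp
        moreover have "- c \<in> M" using submod_neg[OF Msub n(2)] .
        ultimately have "dl j r \<in> P" unfolding P_def using n(1) by blast
        hence "r \<in> I'" unfolding I'_def using n(3) by simp
        hence "r = 0" using I'0 by simp
        hence "n = c" using n(4) by (simp add: dl_zero)
        thus "n \<in> {0}" using NM n(1,2) by auto
      qed
      show "{0} \<subseteq> N \<inter> M'" using submod_zero[OF N] submod_zero[OF M'sub] by simp
    qed
    have "M \<subseteq> M'"
    proof
      fix c assume "c \<in> M"
      moreover have "c = c + dl j 0" by (simp add: dl_zero)
      ultimately show "c \<in> M'" unfolding M'_def using I0 by blast
    qed
    moreover have "M' \<in> A" unfolding A_def using M'sub NM' by simp
    ultimately have "M' = M" using max by blast
    moreover have "dl j (f I) \<in> M'"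
    proof -
      have "dl j (f I) = 0 + dl j (f I)" by simp
      thus ?thesis unfolding M'_def using submod_zero[OF Msub] fI by blast
    qed
    ultimately have "dl j (f I) \<in> P" using MP by simp
    thus False using I(2) by simp
  qed
  have "\<forall>y\<in>vecs \<Lambda>. \<exists>n\<in>N. \<exists>c\<in>M. y = n + c"
  proof
    fix y :: "'l \<Rightarrow> 'a" assume "y \<in> vecs \<Lambda>"
    hence "y \<in> P" using all by blast
    thus "\<exists>n\<in>N. \<exists>c\<in>M. y = n + c" unfolding P_def by blast
  qed
  thus ?thesis using Msub NM by (intro exI[of _ M]) simp
qed


lemma mv_dl1:
  assumes a: "(a :: 'l \<Rightarrow> 'l \<Rightarrow> 'a::ring_1) \<in> cfm \<Lambda>" and l: "l \<in> \<Lambda>"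
  shows "mv \<Lambda> a (dl l 1) = (\<lambda>k. a k l)"
proof (intro ext)
  fix i
  have "{j\<in>\<Lambda>. dl l (1::'a) j \<noteq> 0} = {l}" using l by (auto simp: dl_def)
  thus "mv \<Lambda> a (dl l 1) i = a i l" unfolding mv_def by (simp add: dl_def)
qed

lemma cfm_regular:
  assumes ss: "semisimple_ring TYPE('a::ring_1)" and a: "(a :: 'l \<Rightarrow> 'l \<Rightarrow> 'a) \<in> cfm \<Lambda>"
  shows "\<exists>b\<in>cfm \<Lambda>. cfm_mult \<Lambda> (cfm_mult \<Lambda> a b) a = a"
proof -
  define N where "N = {mv \<Lambda> a v |v. v \<in> vecs \<Lambda>}"
  have Nsub: "submod \<Lambda> N" unfolding N_def by (rule image_submod[OF a])
  obtain Cm where Cm: "submod \<Lambda> Cm" "N \<inter> Cm = {0}" "\<forall>y\<in>vecs \<Lambda>. \<exists>n\<in>N. \<exists>c\<in>Cm. y = n + c"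
    using complement[OF ss Nsub] by blast
  have ex: "\<exists>d. d \<in> vecs \<Lambda> \<and> dl k 1 - mv \<Lambda> a d \<in> Cm" if k: "k \<in> \<Lambda>" for k
  proof -
    obtain n c where "n \<in> N" "c \<in> Cm" "dl k 1 = n + c" using Cm(3) dl_vecs[OF k] by blast
    then obtain d where "d \<in> vecs \<Lambda>" "n = mv \<Lambda> a d" "c = dl k 1 - mv \<Lambda> a d" unfolding N_def
      by (auto simp: algebra_simps)
    thus ?thesis using \<open>c \<in> Cm\<close> by blast
  qed
  define d where "d k = (SOME d. d \<in> vecs \<Lambda> \<and> dl k 1 - mv \<Lambda> a d \<in> Cm)" for k
  have d: "d k \<in> vecs \<Lambda> \<and> dl k 1 - mv \<Lambda> a (d k) \<in> Cm" if "k \<in> \<Lambda>" for k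
    unfolding d_def using someI_ex[OF ex[OF that]] .
  define b where "b = (\<lambda>i k. if k \<in> \<Lambda> then d k i else (0::'a))"
  have bC: "b \<in> cfm \<Lambda>"
  proof (rule cfmI)
    fix i j assume h: "i \<notin> \<Lambda> \<or> j \<notin> \<Lambda>"
    show "b i j = 0"
    proof (cases "j \<in> \<Lambda>")
      case True
      hence "i \<notin> \<Lambda>" using h by auto
      thus ?thesis using vecs_out[of "d j" \<Lambda> i] d[OF True] True unfolding b_def by auto
    next
      case False
      thus ?thesis unfolding b_def by simp
    qed
  next
    fix j assume j: "j \<in> \<Lambda>"
    have "{i\<in>\<Lambda>. b i j \<noteq> 0} \<subseteq> {i. d j i \<noteq> 0}" unfolding b_def using j by auto
    thus "finite {i\<in>\<Lambda>. b i j \<noteq> 0}" using vecs_fin d[OF j] finite_subset by blast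
  qed
  have ab: "cfm_mult \<Lambda> a b i k = mv \<Lambda> a (d k) i" if "k \<in> \<Lambda>" for i k
    unfolding cfm_mult_def mv_def b_def using that by simp
  have "cfm_mult \<Lambda> (cfm_mult \<Lambda> a b) a = a"
  proof (intro ext)
    fix i l
    show "cfm_mult \<Lambda> (cfm_mult \<Lambda> a b) a i l = a i l"
    proof (cases "l \<in> \<Lambda>")
      case False
      thus ?thesis using cfm_out[OF mult_in_cfm[OF mult_in_cfm[OF a bC] a]] cfm_out[OF a] by auto
    next
      case l: True
      define w where "w = (\<lambda>k. a k l)"
      define K where "K = {k\<in>\<Lambda>. a k l \<noteq> 0}"
      have fK: "finite K" unfolding K_def using cfm_fin[OF a] .
      have KL: "K \<subseteq> \<Lambda>" unfolding K_def by auto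
      define n' where "n' = (\<lambda>i. \<Sum>k\<in>K. mv \<Lambda> a (d k) i * w k)"
      define c' where "c' = (\<lambda>i. \<Sum>k\<in>K. (dl k 1 - mv \<Lambda> a (d k)) i * w k)"
      have "n' \<in> N" unfolding n'_def
        using submod_lincomb[OF Nsub fK, of "\<lambda>k. mv \<Lambda> a (d k)" w] d KL unfolding N_def by blast
      have "c' \<in> Cm" unfolding c'_def
        using submod_lincomb[OF Cm(1) fK, of "\<lambda>k. dl k 1 - mv \<Lambda> a (d k)" w] d KL by blast
      have wdec: "w = n' + c'"
      proof (intro ext)
        fix i
        have "(n' + c') i = (\<Sum>k\<in>K. dl k 1 i * w k)"
          unfolding n'_def c'_def by (simp add: sum.distrib[symmetric] algebra_simps)
        also have "\<dots> = (\<Sum>k\<in>K. if k = i then w i else 0)"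
          by (rule sum.cong) (auto simp: dl_def)
        also have "\<dots> = w i" using fK cfm_out[OF a, of i l] unfolding K_def w_def by (auto simp: sum.delta)
        finally show "w i = (n' + c') i" by simp
      qed
      have wN: "w \<in> N" unfolding N_def w_def using mv_dl1[OF a l] dl_vecs[OF l] by (metis (mono_tags, lifting) mem_Collect_eq)
      have "c' = w - n'" using wdec by simp
      hence "c' \<in> N" using submod_diff[OF Nsub wN \<open>n' \<in> N\<close>] by simp
      hence "c' = 0" using Cm(2) \<open>c' \<in> Cm\<close> by blast
      hence wn: "w = n'" using wdec by simp
      have "cfm_mult \<Lambda> (cfm_mult \<Lambda> a b) a i l = (\<Sum>k\<in>K. cfm_mult \<Lambda> a b i k * a k l)"
        unfolding cfm_mult_def K_def by simp
      also have "\<dots> = n' i" unfolding n'_def w_def using ab KL by (intro sum.cong) auto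
      also have "\<dots> = a i l" using wn unfolding w_def by metis
      finally show ?thesis .
    qed
  qed
  thus ?thesis using bC by blast
qed

lemma ss_CFM_SSP:
  assumes ss: "semisimple_ring TYPE('a::ring_1)"
  shows "CFM_SSP TYPE('a) (\<Lambda> :: 'l set)"
proof -
  have "\<forall>a\<in>(cfm \<Lambda> :: ('l \<Rightarrow> 'l \<Rightarrow> 'a) set). \<exists>b\<in>cfm \<Lambda>. cfm_mult \<Lambda> (cfm_mult \<Lambda> a b) a = a"
    using cfm_regular[OF ss] by blast
  hence "SSP_in (cfm \<Lambda> :: ('l \<Rightarrow> 'l \<Rightarrow> 'a) set) (+) 0 (cfm_mult \<Lambda>)"
    using aring.regular_SSP_both[OF aring_cfm] by blast
  thus ?thesis unfolding CFM_SSP_def cfm_add_eq cfm_zero_eq .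
qed


definition propP :: "'a::ring_1 itself \<Rightarrow> bool" where
  "propP _ \<longleftrightarrow> (\<forall>x::nat \<Rightarrow> 'a. \<exists>S r. finite S \<and> (\<forall>m. (\<Sum>k\<in>S. x k * r k) * x m = x m))"

lemma rid_range: "right_ideal (range ((*) (z::'a::ring_1)))"
  unfolding right_ideal_def right_ideal_in_def
proof (intro conjI ballI)
  show "range ((*) z) \<subseteq> UNIV" by simp
  show "0 \<in> range ((*) z)" by (metis mult_zero_right rangeI)
next
  fix x y assume "x \<in> range ((*) z)" "y \<in> range ((*) z)"
  then obtain s t where "x = z * s" "y = z * t" by auto
  hence "x + y = z * (s + t)" by (simp add: distrib_left)
  thus "x + y \<in> range ((*) z)" by simp
next
  fix x r assume "x \<in> range ((*) z)"
  then obtain s where "x = z * s" by auto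
  hence "x * r = z * (s * r)" by (simp add: mult.assoc)
  thus "x * r \<in> range ((*) z)" by simp
qed

lemma rid_mem: "right_ideal I \<Longrightarrow> x \<in> I \<Longrightarrow> x * r \<in> I"
  unfolding right_ideal_def right_ideal_in_def by auto

lemma rid_zero: "right_ideal I \<Longrightarrow> 0 \<in> I"
  unfolding right_ideal_def right_ideal_in_def by auto

lemma rid_add: "right_ideal I \<Longrightarrow> x \<in> I \<Longrightarrow> y \<in> I \<Longrightarrow> x + y \<in> I"
  unfolding right_ideal_def right_ideal_in_def by auto

lemma rid_sum:
  assumes I: "right_ideal I"
  shows "finite S \<Longrightarrow> (\<forall>k\<in>S. g k \<in> I) \<Longrightarrow> sum g S \<in> I"
  by (induction S rule: finite_induct) (auto simp: rid_zero[OF I] rid_add[OF I])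

lemma propP_single:
  assumes P: "propP TYPE('a::ring_1)"
  shows "\<exists>s. (z * s) * z = (z::'a)"
proof -
  obtain S :: "nat set" and r where "finite S" "\<forall>m::nat. (\<Sum>k\<in>S. (\<lambda>_. z) k * r k) * (\<lambda>_. z) m = (\<lambda>_. z) m"
    using P[unfolded propP_def, THEN spec[of _ "\<lambda>_::nat. z"]] by blast
  hence "(z * (\<Sum>k\<in>S. r k)) * z = z" by (simp add: sum_distrib_left)
  thus ?thesis by blast
qed

lemma step_lemma:
  assumes P: "propP TYPE('a::ring_1)"
    and f: "f * f = f" "f \<noteq> (0::'a)"
    and nomin: "\<not> minimal_right_ideal (range ((*) f))"
  shows "\<exists>f'. f' * f' = f' \<and> f' \<noteq> 0 \<and> f' \<noteq> f \<and> f * f' = f' \<and> f' * f = f'"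
proof -
  have "range ((*) f) \<noteq> {0}" using f(2) by (metis mult_1_right rangeI singletonD)
  then obtain J where J: "right_ideal J" "J \<subseteq> range ((*) f)" "J \<noteq> {0}" "J \<noteq> range ((*) f)"
    using nomin rid_range[of f] unfolding minimal_right_ideal_def by blast
  obtain z where z: "z \<in> J" "z \<noteq> 0" using J(3) rid_zero[OF J(1)] by blast
  obtain s where s: "(z * s) * z = z" using propP_single[OF P] by blast
  define e where "e = z * s"
  have ez: "e * z = z" using s e_def by simp
  have ee: "e * e = e" unfolding e_def using s by (simp add: mult.assoc[symmetric])
  obtain t where zt: "z = f * t" using J(2) z(1) by auto
  have fz: "f * z = z" using zt f(1) by (simp add: mult.assoc[symmetric])
  have fe: "f * e = e" unfolding e_def using fz by (simp add: mult.assoc[symmetric])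
  have fe': "f * (e * w) = e * w" for w using fe by (simp add: mult.assoc[symmetric])
  have ee': "e * (e * w) = e * w" for w using ee by (simp add: mult.assoc[symmetric])
  have ff': "f * (f * w) = f * w" for w using f(1) by (simp add: mult.assoc[symmetric])
  define f' where "f' = e * f"
  have "f' * f' = f'" unfolding f'_def by (simp add: mult.assoc fe' ee')
  moreover have "f * f' = f'" unfolding f'_def by (simp add: fe')
  moreover have "f' * f = f'" unfolding f'_def by (simp add: mult.assoc f(1))
  moreover have "f' \<noteq> 0"
  proof
    assume "f' = 0"
    hence "f' * z = 0" by simp
    moreover have "f' * z = z" unfolding f'_def by (simp add: mult.assoc fz ez)
    ultimately show False using z(2) by simp
  qed
  moreover have "f' \<noteq> f"
  proof
    assume ff: "f' = f"
    have "f' = z * (s * f)" unfolding f'_def e_def by (simp add: mult.assoc)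
    hence "f' \<in> J" using rid_mem[OF J(1) z(1)] by simp
    hence "range ((*) f) \<subseteq> J" using ff rid_mem[OF J(1)] by auto
    thus False using J(2,4) by blast
  qed
  ultimately show ?thesis by blast
qed

lemma minimal_exists:
  assumes P: "propP TYPE('a::ring_1)" and y: "(y::'a) \<noteq> 0"
  shows "\<exists>I. minimal_right_ideal I \<and> I \<subseteq> range ((*) y)"
proof (rule ccontr)
  assume no: "\<not> (\<exists>I. minimal_right_ideal I \<and> I \<subseteq> range ((*) y))"
  define Q where "Q f \<longleftrightarrow> f * f = f \<and> f \<noteq> 0 \<and> (\<exists>t. f = y * t)" for f
  have stepQ: "\<exists>f'. Q f' \<and> f' \<noteq> f \<and> f * f' = f' \<and> f' * f = f'" if "Q f" for f
  proof -
    have "range ((*) f) \<subseteq> range ((*) y)" using that unfolding Q_def by (auto simp: mult.assoc)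
    hence "\<not> minimal_right_ideal (range ((*) f))" using no by blast
    moreover have "f * f = f" "f \<noteq> 0" using that unfolding Q_def by auto
    ultimately obtain f' where f': "f' * f' = f'" "f' \<noteq> 0" "f' \<noteq> f" "f * f' = f'" "f' * f = f'"
      using step_lemma[OF P] by blast
    have "\<exists>t. f = y * t" using that unfolding Q_def by blast
    then obtain t where "f = y * t" by blast
    hence "f' = y * (t * f')" using f'(4) by (simp add: mult.assoc)
    thus ?thesis using f' unfolding Q_def by blast
  qed
  define st where "st f = (SOME f'. Q f' \<and> f' \<noteq> f \<and> f * f' = f' \<and> f' * f = f')" for f
  have st: "Q (st f) \<and> st f \<noteq> f \<and> f * st f = st f \<and> st f * f = st f" if "Q f" for f
    unfolding st_def using someI_ex[OF stepQ[OF that]] .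
  obtain s where s: "(y * s) * y = y" using propP_single[OF P] by blast
  have Q0: "Q (y * s)" unfolding Q_def
  proof (intro conjI)
    show "y * s * (y * s) = y * s" using s by (simp add: mult.assoc[symmetric])
    show "y * s \<noteq> 0" using s y by auto
  qed blast
  define f where "f n = (st ^^ n) (y * s)" for n
  have Qf: "Q (f n)" for n by (induction n) (auto simp: f_def Q0 st)
  have fS: "f (Suc n) = st (f n)" for n by (simp add: f_def)
  define x where "x n = 1 - f n" for n
  have xx: "x (Suc n) * x n = x n" for n
    unfolding x_def using st[OF Qf[of n]] fS[of n] by (simp add: algebra_simps)
  have xle: "\<forall>k\<le>N. x N * x k = x k" for N
  proof (induction N)
    case 0
    have "f 0 * f 0 = f 0" using Qf[of 0] unfolding Q_def by simp
    then show ?case unfolding x_def by (simp add: algebra_simps)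
  next
    case (Suc N)
    show ?case
    proof (intro allI impI)
      fix k assume "k \<le> Suc N"
      show "x (Suc N) * x k = x k"
      proof (cases "k = Suc N")
        case True
        have "f k * f k = f k" using Qf[of k] unfolding Q_def by simp
        then show ?thesis using True unfolding x_def by (simp add: algebra_simps)
      next
        case False
        hence "k \<le> N" using \<open>k \<le> Suc N\<close> by simp
        hence "x (Suc N) * x k = x (Suc N) * (x N * x k)" using Suc by simp
        also have "\<dots> = x N * x k" using xx[of N] by (simp add: mult.assoc[symmetric])
        also have "\<dots> = x k" using Suc \<open>k \<le> N\<close> by simp
        finally show ?thesis .
      qed
    qed
  qed
  obtain S r where S: "finite S" "\<forall>m. (\<Sum>k\<in>S. x k * r k) * x m = x m"
    using P unfolding propP_def by blast
  define e where "e = (\<Sum>k\<in>S. x k * r k)"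
  define N where "N = (if S = {} then 0 else Max S)"
  have "\<forall>k\<in>S. k \<le> N" unfolding N_def using S(1) by auto
  hence eN: "x N * e = e" unfolding e_def using xle[of N]
    by (simp add: sum_distrib_left mult.assoc[symmetric])
  have xe: "x (Suc N) = e * x (Suc N)" using S(2) e_def by simp
  also have "\<dots> = x N * (e * x (Suc N))" using eN by (simp add: mult.assoc[symmetric])
  finally have xs: "x (Suc N) = x N * x (Suc N)" using xe by simp
  have fx: "f N * x N = 0" using Qf[of N] unfolding Q_def x_def by (simp add: algebra_simps)
  have "f N * x (Suc N) = f N * (x N * x (Suc N))" using xs by simp
  also have "\<dots> = (f N * x N) * x (Suc N)" by (simp add: mult.assoc)
  finally have "f N * x (Suc N) = 0" using fx by simp
  moreover have "f N * x (Suc N) = f N - f (Suc N)"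
    unfolding x_def using st[OF Qf[of N]] fS[of N] by (simp add: algebra_simps)
  ultimately have "f (Suc N) = f N" by simp
  thus False using st[OF Qf[of N]] fS[of N] by simp
qed

definition expr :: "'a::ring_1 \<Rightarrow> bool" where
  "expr w \<longleftrightarrow> (\<exists>F f. finite F \<and> (\<forall>I\<in>F. minimal_right_ideal I \<and> f I \<in> I) \<and> w = (\<Sum>I\<in>F. f I))"

lemma expr_all: "expr (1::'a::ring_1) \<Longrightarrow> semisimple_ring TYPE('a)"
  unfolding semisimple_ring_def
proof
  fix w :: 'a
  assume "expr (1::'a)"
  then obtain F and f :: "'a set \<Rightarrow> 'a" where F: "finite F" "\<forall>I\<in>F. minimal_right_ideal I \<and> f I \<in> I" "1 = (\<Sum>I\<in>F. f I)"
    unfolding expr_def by blast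
  have "w = 1 * w" by simp
  also have "\<dots> = (\<Sum>I\<in>F. f I) * w" using F(3) by simp
  also have "\<dots> = (\<Sum>I\<in>F. f I * w)" by (rule sum_distrib_right)
  finally have "w = (\<Sum>I\<in>F. f I * w)" .
  moreover have "\<forall>I\<in>F. minimal_right_ideal I \<and> f I * w \<in> I"
  proof
    fix I assume "I \<in> F"
    hence m: "minimal_right_ideal I" "f I \<in> I" using F(2) by auto
    hence "right_ideal I" unfolding minimal_right_ideal_def by blast
    thus "minimal_right_ideal I \<and> f I * w \<in> I" using m rid_mem by blast
  qed
  ultimately show "\<exists>F f. finite F \<and> (\<forall>I\<in>F. minimal_right_ideal I \<and> f I \<in> I) \<and> w = (\<Sum>I\<in>F. f I)"
    using F(1) by (intro exI[of _ F] exI[of _ "\<lambda>I. f I * w"]) auto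
qed

lemma expr_from_sum:
  assumes S: "finite S" and min: "\<forall>k\<in>S. minimal_right_ideal (range ((*) (x k)))"
  shows "expr (\<Sum>k\<in>S. x k * (r k::'a::ring_1))"
proof -
  define h where "h k = range ((*) (x k))" for k
  define F where "F = h ` S"
  define f where "f I = (\<Sum>k\<in>{k\<in>S. h k = I}. x k * r k)" for I
  have "(\<Sum>k\<in>S. x k * r k) = (\<Sum>I\<in>F. f I)"
    unfolding F_def f_def using sum.image_gen[OF S, of "\<lambda>k. x k * r k" h] by simp
  moreover have "\<forall>I\<in>F. minimal_right_ideal I \<and> f I \<in> I"
  proof
    fix I assume "I \<in> F"
    then obtain k0 where k0: "k0 \<in> S" "I = h k0" unfolding F_def by blast
    have "minimal_right_ideal I" using min k0 h_def by simp
    moreover have "f I \<in> I" unfolding f_def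
    proof (rule rid_sum)
      show "right_ideal I" using k0 rid_range h_def by simp
      show "finite {k\<in>S. h k = I}" using S by simp
      show "\<forall>k\<in>{k\<in>S. h k = I}. x k * r k \<in> I" unfolding h_def by auto
    qed
    ultimately show "minimal_right_ideal I \<and> f I \<in> I" by simp
  qed
  ultimately show ?thesis unfolding expr_def F_def using S by blast
qed

definition spanl :: "'a::ring_1 list \<Rightarrow> 'a set" where
  "spanl l = {\<Sum>k<length l. l ! k * s k |s. True}"

lemma new_elem:
  assumes P: "propP TYPE('a::ring_1)" and ne: "\<not> expr (1::'a)"
    and l: "\<forall>z\<in>set l. minimal_right_ideal (range ((*) z))"
  shows "\<exists>z::'a. minimal_right_ideal (range ((*) z)) \<and> z \<notin> spanl l"
proof -
  define x where "x k = (if k < length l then l ! k else 0)" for k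
  obtain S r where S: "finite S" "\<forall>m. (\<Sum>k\<in>S. x k * r k) * x m = x m"
    using P unfolding propP_def by blast
  define e where "e = (\<Sum>k\<in>S. x k * r k)"
  define S' where "S' = {k\<in>S. k < length l}"
  have eS': "e = (\<Sum>k\<in>S'. x k * r k)" unfolding e_def S'_def
    by (rule sum.mono_neutral_right) (auto simp: S x_def)
  have "expr (\<Sum>k\<in>S'. x k * r k)"
    by (rule expr_from_sum) (use S l in \<open>auto simp: S'_def x_def\<close>)
  hence e1: "e \<noteq> 1" using ne eS' by auto
  have ex: "e * x m = x m" for m using S(2) e_def by simp
  have "e * e = e * (\<Sum>k\<in>S. x k * r k)" by (simp add: e_def)
  also have "\<dots> = (\<Sum>k\<in>S. (e * x k) * r k)" by (simp add: sum_distrib_left mult.assoc)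
  also have "\<dots> = (\<Sum>k\<in>S. x k * r k)" using ex by simp
  finally have ee: "e * e = e" by (simp add: e_def)
  have "1 - e \<noteq> 0" using e1 by simp
  then obtain I where I: "minimal_right_ideal I" "I \<subseteq> range ((*) (1 - e))"
    using minimal_exists[OF P] by blast
  have Iid: "right_ideal I" using I(1) unfolding minimal_right_ideal_def by blast
  obtain z where z: "z \<in> I" "z \<noteq> 0" using I(1) rid_zero[OF Iid] unfolding minimal_right_ideal_def by blast
  have "range ((*) z) \<subseteq> I" using rid_mem[OF Iid z(1)] by auto
  moreover have "range ((*) z) \<noteq> {0}" using z(2) by (metis mult_1_right rangeI singletonD)
  ultimately have zI: "range ((*) z) = I" using I(1) rid_range[of z] unfolding minimal_right_ideal_def by blast
  obtain t where zt: "z = (1 - e) * t" using I(2) z(1) by auto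
  have ez: "e * z = 0" unfolding zt using ee by (simp add: algebra_simps mult.assoc[symmetric])
  have "z \<notin> spanl l"
  proof
    assume "z \<in> spanl l"
    then obtain s where zs: "z = (\<Sum>k<length l. l ! k * s k)" unfolding spanl_def by blast
    have "z = (\<Sum>k<length l. x k * s k)" unfolding zs x_def by (intro sum.cong) auto
    hence "e * z = z" using ex by (simp add: sum_distrib_left mult.assoc[symmetric])
    thus False using ez z(2) by simp
  qed
  thus ?thesis using I(1) zI by auto
qed

fun build :: "('b list \<Rightarrow> 'b) \<Rightarrow> nat \<Rightarrow> 'b list" where
  "build st 0 = []"
| "build st (Suc n) = build st n @ [st (build st n)]"

lemma build_map: "build st n = map (\<lambda>k. st (build st k)) [0..<n]"
  by (induction n) auto

lemma propP_semisimple: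
  assumes P: "propP TYPE('a::ring_1)"
  shows "semisimple_ring TYPE('a)"
proof (rule ccontr)
  assume nss: "\<not> semisimple_ring TYPE('a)"
  hence ne: "\<not> expr (1::'a)" using expr_all by blast
  define good where "good l \<longleftrightarrow> (\<forall>z\<in>set l. minimal_right_ideal (range ((*) (z::'a))))" for l
  define st where "st l = (SOME z::'a. minimal_right_ideal (range ((*) z)) \<and> z \<notin> spanl l)" for l
  have st: "minimal_right_ideal (range ((*) (st l))) \<and> st l \<notin> spanl l" if "good l" for l
    unfolding st_def using someI_ex[OF new_elem[OF P ne that[unfolded good_def]]] .
  have gb: "good (build st n)" for n
    by (induction n) (auto simp: good_def st[unfolded good_def])
  define x where "x k = st (build st k)" for k
  have bm: "build st n = map x [0..<n]" for n unfolding x_def by (rule build_map)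
  have xn: "x n \<notin> spanl (map x [0..<n])" for n using st[OF gb[of n]] bm x_def by simp
  obtain S r where S: "finite S" "\<forall>m. (\<Sum>k\<in>S. x k * r k) * x m = x m"
    using P unfolding propP_def by blast
  define N where "N = (if S = {} then 0 else Max S)"
  have SN: "S \<subseteq> {..<Suc N}" unfolding N_def using S(1) by (auto simp: less_Suc_eq_le)
  define r' where "r' k = (if k \<in> S then r k else 0)" for k
  have "(\<Sum>k\<in>S. x k * r k) = (\<Sum>k<Suc N. x k * r' k)"
    unfolding r'_def by (rule sum.mono_neutral_cong_left) (use S SN in auto)
  hence "x (Suc N) = (\<Sum>k<Suc N. x k * r' k) * x (Suc N)" using S(2) by simp
  also have "\<dots> = (\<Sum>k<Suc N. x k * (r' k * x (Suc N)))"
    by (subst sum_distrib_right) (simp add: mult.assoc del: sum.lessThan_Suc)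
  also have "\<dots> = (\<Sum>k<length (map x [0..<Suc N]). (map x [0..<Suc N]) ! k * (r' k * x (Suc N)))"
    by (intro sum.cong) (auto simp del: upt_Suc)
  finally have "x (Suc N) = (\<Sum>k<length (map x [0..<Suc N]). (map x [0..<Suc N]) ! k * (\<lambda>k. r' k * x (Suc N)) k)" .
  hence "\<exists>s. x (Suc N) = (\<Sum>k<length (map x [0..<Suc N]). (map x [0..<Suc N]) ! k * s k) \<and> True"
    by (intro exI[of _ "\<lambda>k. r' k * x (Suc N)"]) simp
  hence "x (Suc N) \<in> spanl (map x [0..<Suc N])" unfolding spanl_def by blast
  thus False using xn[of "Suc N"] by simp
qed


lemma lideal_def': "right_ideal_in C (+) 0 (\<lambda>x y. mult y x) I \<longleftrightarrow>
   I \<subseteq> C \<and> 0 \<in> I \<and> (\<forall>x\<in>I. \<forall>y\<in>I. x + y \<in> I) \<and> (\<forall>x\<in>I. \<forall>r\<in>C. mult r x \<in> I)"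
  unfolding right_ideal_in_def by simp

lemma SSP_propP:
  assumes inf: "infinite (\<Lambda> :: 'l set)"
    and SSP: "left_SSP_in (cfm \<Lambda> :: ('l \<Rightarrow> 'l \<Rightarrow> 'a::ring_1) set) (+) 0 (cfm_mult \<Lambda>)"
  shows "propP TYPE('a)"
  unfolding propP_def
proof
  fix x :: "nat \<Rightarrow> 'a"
  obtain p where p: "p \<in> \<Lambda>" using inf by (metis finite.emptyI ex_in_conv)
  have "infinite (\<Lambda> - {p})" using inf by simp
  then obtain jn :: "nat \<Rightarrow> 'l" where jn: "inj jn" "range jn \<subseteq> \<Lambda> - {p}"
    using infinite_countable_subset by blast
  have jnp: "jn n \<noteq> p" for n using jn(2) by auto
  have jnL: "jn n \<in> \<Lambda>" for n using jn(2) by auto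
  let ?C = "cfm \<Lambda> :: ('l \<Rightarrow> 'l \<Rightarrow> 'a) set"
  let ?m = "\<lambda>x y. cfm_mult \<Lambda> y x"
  interpret A: aring ?C "cfm_mult \<Lambda>" "idm \<Lambda>" by (rule aring_cfm)
  define L1 where "L1 = {Y \<in> ?C. \<forall>i k. k \<noteq> p \<longrightarrow> Y i k = 0}"
  define L2 where "L2 = {Y \<in> ?C. (\<forall>i k. k \<noteq> p \<and> k \<notin> range jn \<longrightarrow> Y i k = 0) \<and> (\<forall>i n. Y i (jn n) = Y i p * x n)}"
  define B1 where "B1 = {Y \<in> ?C. \<forall>i. Y i p = 0}"
  have colmult: "cfm_mult \<Lambda> R Y i k = 0" if "Y \<in> ?C" "\<forall>i. Y i k = 0" for R Y i k
    unfolding cfm_mult_def using that by simp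
  have L1id: "right_ideal_in ?C (+) 0 ?m L1"
    unfolding lideal_def' L1_def using A.zero_in A.add_in A.mult_in colmult by auto
  have B1id: "right_ideal_in ?C (+) 0 ?m B1"
    unfolding lideal_def' B1_def using A.zero_in A.add_in A.mult_in colmult by auto
  have L2mult: "cfm_mult \<Lambda> R Y \<in> L2" if R: "R \<in> ?C" and Y: "Y \<in> L2" for R Y
  proof -
    have YC: "Y \<in> ?C" using Y L2_def by simp
    have "cfm_mult \<Lambda> R Y i k = 0" if "k \<noteq> p \<and> k \<notin> range jn" for i k
      by (rule colmult[OF YC]) (use Y that L2_def in auto)
    moreover have "cfm_mult \<Lambda> R Y i (jn n) = cfm_mult \<Lambda> R Y i p * x n" for i n
    proof -
      have fin: "finite {j\<in>\<Lambda>. Y j p \<noteq> 0}" using cfm_fin[OF YC] .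
      have "cfm_mult \<Lambda> R Y i (jn n) = (\<Sum>j\<in>{j\<in>\<Lambda>. Y j p \<noteq> 0}. R i j * Y j (jn n))"
        by (rule sum_gen[OF YC fin]) (use Y L2_def in auto)
      also have "\<dots> = (\<Sum>j\<in>{j\<in>\<Lambda>. Y j p \<noteq> 0}. R i j * Y j p) * x n"
        using Y unfolding L2_def by (simp add: sum_distrib_right mult.assoc)
      also have "\<dots> = cfm_mult \<Lambda> R Y i p * x n" unfolding cfm_mult_def by simp
      finally show ?thesis .
    qed
    ultimately show ?thesis unfolding L2_def using A.mult_in[OF R YC] by auto
  qed
  have L2id: "right_ideal_in ?C (+) 0 ?m L2"
    unfolding lideal_def'
  proof (intro conjI ballI)
    show "L2 \<subseteq> ?C" unfolding L2_def by auto
    show "0 \<in> L2" unfolding L2_def using A.zero_in by simp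
  next
    fix X Y assume "X \<in> L2" "Y \<in> L2"
    thus "X + Y \<in> L2" unfolding L2_def using A.add_in by (auto simp: distrib_right)
  next
    fix Y R assume "Y \<in> L2" "R \<in> ?C"
    thus "cfm_mult \<Lambda> R Y \<in> L2" using L2mult by blast
  qed
  have L1B1: "L1 \<inter> B1 = {0}"
  proof
    show "L1 \<inter> B1 \<subseteq> {0}"
    proof
      fix Y assume "Y \<in> L1 \<inter> B1"
      hence "Y i k = 0" for i k unfolding L1_def B1_def by (cases "k = p") auto
      thus "Y \<in> {0}" by (auto intro!: ext)
    qed
    show "{0} \<subseteq> L1 \<inter> B1" using L1id B1id unfolding lideal_def' by auto
  qed
  have L2B1: "L2 \<inter> B1 = {0}"
  proof
    show "L2 \<inter> B1 \<subseteq> {0}"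
    proof
      fix Y assume Y: "Y \<in> L2 \<inter> B1"
      have "Y i k = 0" for i k
      proof -
        consider "k = p" | "k \<in> range jn" | "k \<noteq> p \<and> k \<notin> range jn" by blast
        thus ?thesis using Y unfolding L2_def B1_def by cases auto
      qed
      thus "Y \<in> {0}" by (auto intro!: ext)
    qed
    show "{0} \<subseteq> L2 \<inter> B1" using L2id B1id unfolding lideal_def' by auto
  qed
  have L1sum: "set_plus_in (+) L1 B1 = ?C"
  proof
    show "set_plus_in (+) L1 B1 \<subseteq> ?C" unfolding set_plus_in_def L1_def B1_def using A.add_in by auto
    show "?C \<subseteq> set_plus_in (+) L1 B1"
    proof
      fix Y assume Y: "Y \<in> ?C"
      define Y1 where "Y1 = (\<lambda>i k. if k = p then Y i k else 0)"
      have Y1C: "Y1 \<in> ?C"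
      proof (rule cfmI)
        fix j
        have "{i\<in>\<Lambda>. Y1 i j \<noteq> 0} \<subseteq> {i\<in>\<Lambda>. Y i j \<noteq> 0}" unfolding Y1_def by auto
        thus "finite {i\<in>\<Lambda>. Y1 i j \<noteq> 0}" using cfm_fin[OF Y] finite_subset by blast
      qed (use cfm_out[OF Y] in \<open>auto simp: Y1_def\<close>)
      have "Y1 \<in> L1" unfolding L1_def using Y1C by (auto simp: Y1_def)
      moreover have "Y - Y1 \<in> B1" unfolding B1_def using A.diff_in[OF Y Y1C] by (auto simp: Y1_def)
      moreover have "Y = Y1 + (Y - Y1)" by simp
      ultimately show "Y \<in> set_plus_in (+) L1 B1" unfolding set_plus_in_def by blast
    qed
  qed
  have L2sum: "set_plus_in (+) L2 B1 = ?C"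
  proof
    show "set_plus_in (+) L2 B1 \<subseteq> ?C" unfolding set_plus_in_def L2_def B1_def using A.add_in by auto
    show "?C \<subseteq> set_plus_in (+) L2 B1"
    proof
      fix Y assume Y: "Y \<in> ?C"
      define Y1 where "Y1 = (\<lambda>i k. if k = p then Y i p else if k \<in> range jn then Y i p * x (inv jn k) else 0)"
      have Y1C: "Y1 \<in> ?C"
      proof (rule cfmI)
        fix j
        have "{i\<in>\<Lambda>. Y1 i j \<noteq> 0} \<subseteq> {i\<in>\<Lambda>. Y i p \<noteq> 0}" unfolding Y1_def by auto
        thus "finite {i\<in>\<Lambda>. Y1 i j \<noteq> 0}" using cfm_fin[OF Y] finite_subset by blast
      next
        fix i j assume "i \<notin> \<Lambda> \<or> j \<notin> \<Lambda>"
        thus "Y1 i j = 0" using cfm_out[OF Y, of i p] p jn(2) unfolding Y1_def by auto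
      qed
      have "Y1 \<in> L2" unfolding L2_def using Y1C jnp jn(1) by (auto simp: Y1_def)
      moreover have "Y - Y1 \<in> B1" unfolding B1_def using A.diff_in[OF Y Y1C] by (auto simp: Y1_def)
      moreover have "Y = Y1 + (Y - Y1)" by simp
      ultimately show "Y \<in> set_plus_in (+) L2 B1" unfolding set_plus_in_def by blast
    qed
  qed
  have S1: "right_summand_in ?C (+) 0 ?m L1"
    unfolding right_summand_in_def using L1id B1id L1B1 L1sum by blast
  have S2: "right_summand_in ?C (+) 0 ?m L2"
    unfolding right_summand_in_def using L2id B1id L2B1 L2sum by blast
  define H where "H = set_plus_in (+) L1 L2"
  have SH: "right_summand_in ?C (+) 0 ?m H"
    using SSP S1 S2 unfolding left_SSP_in_def right_SSP_in_def H_def by blast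
  then obtain B where Hid: "right_ideal_in ?C (+) 0 ?m H" and Bid: "right_ideal_in ?C (+) 0 ?m B"
    and HB: "H \<inter> B = {0}" and HBs: "set_plus_in (+) H B = ?C"
    unfolding right_summand_in_def by blast
  obtain \<epsilon> \<beta> where eps: "\<epsilon> \<in> H" and bet: "\<beta> \<in> B" and one: "idm \<Lambda> = \<epsilon> + \<beta>"
    using HBs A.one_in unfolding set_plus_in_def by blast
  have HC: "H \<subseteq> ?C" and BC: "B \<subseteq> ?C" using Hid Bid unfolding lideal_def' by auto
  define E where "E = (\<lambda>i k. if i = p \<and> k = p then 1 else (0::'a))"
  define Z where "Z = (\<lambda>i k. if i = p then (if k = p then 1 else if k \<in> range jn then x (inv jn k) else 0) else (0::'a))"
  define X where "X = Z + (- E)"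
  have EC: "E \<in> ?C"
  proof (rule cfmI)
    fix j
    have "{i\<in>\<Lambda>. E i j \<noteq> 0} \<subseteq> {p}" unfolding E_def by auto
    thus "finite {i\<in>\<Lambda>. E i j \<noteq> 0}" using finite_subset by blast
  qed (use p in \<open>auto simp: E_def\<close>)
  have ZC: "Z \<in> ?C"
  proof (rule cfmI)
    fix j
    have "{i\<in>\<Lambda>. Z i j \<noteq> 0} \<subseteq> {p}" unfolding Z_def by auto
    thus "finite {i\<in>\<Lambda>. Z i j \<noteq> 0}" using finite_subset by blast
  next
    fix i j assume "i \<notin> \<Lambda> \<or> j \<notin> \<Lambda>"
    thus "Z i j = 0" using p jn(2) unfolding Z_def by auto
  qed
  have XC: "X \<in> ?C" unfolding X_def using A.diff_in[OF ZC EC] by simp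
  have "- E \<in> L1" unfolding L1_def using A.uminus_in[OF EC] by (auto simp: E_def)
  moreover have "Z \<in> L2" unfolding L2_def using ZC jnp jn(1) by (auto simp: Z_def)
  moreover have "X = (- E) + Z" unfolding X_def by (simp add: algebra_simps)
  ultimately have XH: "X \<in> H" unfolding H_def set_plus_in_def by blast
  have Xval: "X p (jn m) = x m" for m unfolding X_def Z_def E_def using jnp jn(1) by simp
  have Xrow: "X i j = (if i = p \<and> j \<in> range jn then x (inv jn j) else 0)" for i j
    unfolding X_def Z_def E_def using jnp by auto
  have epsC: "\<epsilon> \<in> ?C" and betC: "\<beta> \<in> ?C" using eps bet HC BC by auto
  have Xe: "cfm_mult \<Lambda> X \<epsilon> \<in> H" using Hid eps XC unfolding lideal_def' by blast
  have Xb: "cfm_mult \<Lambda> X \<beta> \<in> B" using Bid bet XC unfolding lideal_def' by blast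
  have "X = cfm_mult \<Lambda> X \<epsilon> + cfm_mult \<Lambda> X \<beta>"
    using A.one_r[OF XC] A.distl[OF XC epsC betC] one by simp
  hence Xbeq: "cfm_mult \<Lambda> X \<beta> = X + (- cfm_mult \<Lambda> X \<epsilon>)" by (simp add: algebra_simps)
  have negH: "- Y \<in> H" if "Y \<in> H" for Y
  proof -
    have YC: "Y \<in> ?C" using that HC by auto
    have "cfm_mult \<Lambda> (- idm \<Lambda>) Y \<in> H" using Hid that A.uminus_in[OF A.one_in] unfolding lideal_def' by blast
    moreover have "cfm_mult \<Lambda> (- idm \<Lambda>) Y = - Y" using A.mult_minus_l[OF A.one_in YC] A.one_l[OF YC] by simp
    ultimately show ?thesis by simp
  qed
  have "cfm_mult \<Lambda> X \<beta> \<in> H" unfolding Xbeq using Hid XH negH[OF Xe] unfolding lideal_def' by blast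
  hence "cfm_mult \<Lambda> X \<beta> = 0" using Xb HB by blast
  hence XXe: "X = cfm_mult \<Lambda> X \<epsilon>" using \<open>X = cfm_mult \<Lambda> X \<epsilon> + cfm_mult \<Lambda> X \<beta>\<close> by simp
  obtain e1 e2 where e1: "e1 \<in> L1" and e2: "e2 \<in> L2" and eps12: "\<epsilon> = e1 + e2"
    using eps unfolding H_def set_plus_in_def by blast
  have e2C: "e2 \<in> ?C" using e2 L2_def by simp
  define V where "V = {j\<in>\<Lambda>. e2 j p \<noteq> 0}"
  have fV: "finite V" unfolding V_def using cfm_fin[OF e2C] .
  have epsjn: "\<epsilon> j (jn m) = e2 j p * x m" for j m
    using e1 e2 jnp unfolding eps12 L1_def L2_def by auto
  define e where "e = (\<Sum>j\<in>V. X p j * e2 j p)"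
  have ex: "e * x m = x m" for m
  proof -
    have "x m = cfm_mult \<Lambda> X \<epsilon> p (jn m)" using XXe Xval by metis
    also have "\<dots> = (\<Sum>j\<in>V. X p j * \<epsilon> j (jn m))"
      by (rule sum_gen[OF epsC fV]) (auto simp: V_def epsjn)
    also have "\<dots> = e * x m" unfolding e_def by (simp add: epsjn sum_distrib_right mult.assoc)
    finally show ?thesis by simp
  qed
  define S where "S = jn -` V"
  have fS: "finite S" unfolding S_def using fV jn(1) by (simp add: finite_vimageI)
  have "e = (\<Sum>j\<in>V \<inter> range jn. X p j * e2 j p)"
    unfolding e_def by (rule sum.mono_neutral_right) (auto simp: fV Xrow)
  also have "V \<inter> range jn = jn ` S" unfolding S_def by auto
  also have "(\<Sum>j\<in>jn ` S. X p j * e2 j p) = (\<Sum>k\<in>S. X p (jn k) * e2 (jn k) p)"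
    using sum.reindex[OF inj_on_subset[OF jn(1) subset_UNIV], of "\<lambda>j. X p j * e2 j p"] by simp
  also have "\<dots> = (\<Sum>k\<in>S. x k * e2 (jn k) p)" using Xval by simp
  finally have "e = (\<Sum>k\<in>S. x k * e2 (jn k) p)" .
  thus "\<exists>S r. finite S \<and> (\<forall>m. (\<Sum>k\<in>S. x k * r k) * x m = x m)" using fS ex by metis
qed


lemma CFM_SSP_ss:
  assumes "infinite (\<Lambda> :: 'l set)" and "CFM_SSP TYPE('a::ring_1) \<Lambda>"
  shows "semisimple_ring TYPE('a)"
proof -
  have "left_SSP_in (cfm \<Lambda> :: ('l \<Rightarrow> 'l \<Rightarrow> 'a) set) (+) 0 (cfm_mult \<Lambda>)"
    using assms(2) unfolding CFM_SSP_def SSP_in_def cfm_add_eq cfm_zero_eq by blast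
  thus ?thesis using propP_semisimple SSP_propP[OF assms(1)] by blast
qed

theorem theorem2p17:
  shows "(semisimple_ring TYPE('a::ring_1) \<longleftrightarrow> CFM_SSP TYPE('a) (UNIV :: nat set))
       \<and> ((\<exists>\<Lambda> :: 'l set. infinite \<Lambda> \<and> CFM_SSP TYPE('a) \<Lambda>) \<longrightarrow> semisimple_ring TYPE('a))
       \<and> (semisimple_ring TYPE('a) \<longrightarrow> (\<forall>\<Lambda> :: 'l set. infinite \<Lambda> \<longrightarrow> CFM_SSP TYPE('a) \<Lambda>))"
proof (intro conjI impI allI iffI)
  assume "semisimple_ring TYPE('a)"
  thus "CFM_SSP TYPE('a) (UNIV :: nat set)" by (rule ss_CFM_SSP)
next
  assume "CFM_SSP TYPE('a) (UNIV :: nat set)"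
  thus "semisimple_ring TYPE('a)" by (rule CFM_SSP_ss[OF infinite_UNIV_nat])
next
  assume "\<exists>\<Lambda> :: 'l set. infinite \<Lambda> \<and> CFM_SSP TYPE('a) \<Lambda>"
  then obtain \<Lambda> :: "'l set" where "infinite \<Lambda>" "CFM_SSP TYPE('a) \<Lambda>" by blast
  thus "semisimple_ring TYPE('a)" by (rule CFM_SSP_ss)
next
  fix \<Lambda> :: "'l set"
  assume "semisimple_ring TYPE('a)" "infinite \<Lambda>"
  thus "CFM_SSP TYPE('a) \<Lambda>" using ss_CFM_SSP by blast
qed

end
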